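(* The admissible, complete, preferred and grounded semantics of fuzzy argumentation frameworks are SCC-recursive, characterized respectively by the following base functions (defined for fuzzy argumentation frameworks $FAF$ with $|SCCS_{FAF}|=1$ and $C\subseteq\mathcal A$): $\mathcal{BF}_{\mathcal{AE}}(FAF,C)=\mathcal{AE}(FAF,C)$; $\mathcal{BF}_{\mathcal{CO}}(FAF,C)=\mathcal{CE}(FAF,C)$; $\mathcal{BF}_{\mathcal{PE}}(FAF,C)=\mathcal{PE}(FAF,C)$; $\mathcal{BF}_{\mathcal{GR}}(FAF,C)=\{GE(FAF,C)\}$. That is, for every fuzzy argumentation framework $FAF=\langle\mathcal A,\rho\rangle$: $\mathcal{AE}(FAF)=\mathcal{GF}_{\mathcal{AE}}(FAF,\mathcal A)$, $\mathcal{CE}(FAF,\mathcal A)=\mathcal{GF}_{\mathcal{CO}}(FAF,\mathcal A)$, $\mathcal{PE}(FAF,\mathcal A)=\mathcal{GF}_{\mathcal{PE}}(FAF,\mathcal A)$, $\{GE(FAF,\mathcal A)\}=\mathcal{GF}_{\mathcal{GR}}(FAF,\mathcal A)$, where $\mathcal{GF}_{\mathcal S}$ is built from the base function $\mathcal{BF}_{\mathcal S}$.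
   Context: Fuzzy sets: a fuzzy set on a crisp set $X$ is a map $S:X\to[0,1]$; $S\subseteq S'$ means $S(x)\le S'(x)$ for all $x$; $\cap,\cup$ are pointwise $\min,\max$; $\mathrm{Supp}(S)=\{x:S(x)>0\}$. A fuzzy point $(x,a)$, $a\in(0,1]$, has value $a$ at $x$ and $0$ elsewhere; $(x,a)\in S$ means $a\le S(x)$. $a*b=\min\{a,b\}$. A fuzzy argumentation framework (FAF) is $\langle\mathcal A,\rho\rangle$ with $\mathrm{Args}$ a crisp set, $\mathcal A$ a fuzzy set on $\mathrm{Args}$, $\rho:\mathrm{Args}\times\mathrm{Args}\to[0,1]$, $\rho_{AB}=\rho(A,B)$; $A$ attacks $B$ iff $\rho_{AB}>0$. Fuzzy arguments are fuzzy points $(A,a)\in\mathcal A$. An attack of $(A,a)$ on $(B,b)$ is tolerable if $\min\{a,\rho_{AB}\}+b\le1$, sufficient otherwise. $(A,a)$ weakens $(B,b)$ to $(B,b')$, $b'=\min\{1-\min\{a,\rho_{AB}\},b\}$. $T\subseteq\mathcal A$ weakening defends $(C,c)$ if for every fuzzy argument $(B,b)$ sufficiently attacking $(C,c)$ there is $(A',a')\in T$ weakening $(B,b)$ to some $(B,b')$ which tolerably attacks $(C,c)$. $T$ is conflict-free if no $(A,a),(B,b)\in T$ with $(A,a)$ sufficiently attacking $(B,b)$; admissible if conflict-free and it weakening defends every element of $T$; $\mathcal{AE}(FAF)$ is the set of admissible sets. For $C\subseteq\mathcal A$: $\mathcal{AE}(FAF,C)$ is the set of admissible $E\subseteq C$;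 $\mathcal{CE}(FAF,C)$ is the set of $E\in\mathcal{AE}(FAF,C)$ such that every fuzzy argument $(A,a)\in C$ weakening defended by $E$ lies in $E$; $\mathcal{PE}(FAF,C)$ is the set of $\subseteq$-maximal elements of $\mathcal{AE}(FAF,C)$; $F_{FAF,C}(T)$ is the union of all fuzzy arguments $(A,a)\in C$ weakening defended by $T$, and $GE(FAF,C)$ is the least fixed point of $F_{FAF,C}$. (With $C=\mathcal A$ these are the complete, preferred and grounded extensions of $FAF$.) Path-equivalence on $\mathrm{Args}$: $A\sim B$ iff $A=B$ or there are chains of attacks from $A$ to $B$ and from $B$ to $A$. $SCC_{FAF}(A)$ is the fuzzy set with value $\mathcal A(B)$ at each $B\sim A$, $0$ elsewhere; $SCCS_{FAF}$ is the set of these. $outparents_{FAF}(S)$ is the fuzzy set of $(B,\mathcal A(B))$ with $B\notin\mathrm{Supp}(S)$ attacking some argument of $\mathrm{Supp}(S)$. For $T\subseteq\mathcal A$, $FAF\downarrow_T=\langle T,\rho|_{\mathrm{Supp}(T)\times\mathrm{Supp}(T)}\rangle$, and notions in $FAF\downarrow_T$ refer to its own fuzzy arguments and attacks. For $E\subseteq\mathcal A$, $S\in SCCS_{FAF}$: $L_{FAF}(S,E)(A)=\max_B\big((E\cap outparents_{FAF}(S))(B)*\rho_{BA}\big)$ for $A\in\mathrm{Supp}(S)$, $0$ elsewhere; $R_{FAF}(S,E)(A)=\min\{\mathcal A(A),1-L_{FAF}(S,E)(A)\}$ for $A\in\mathrm{Supp}(S)$, $0$ elsewhere; $D_{FAF}(S,E)$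 is the union of fuzzy points $(A,a)\in R_{FAF}(S,E)$ such that for every $(B,b)\in outparents_{FAF}(S)$ sufficiently attacking $(A,a)$ there is $(C,c)\in E$ weakening $(B,b)$ to some $(B,b')$ which tolerably attacks $(A,a)$. SCC-recursiveness: given a base function $\mathcal{BF}_{\mathcal S}$ assigning to each FAF with $|SCCS_{FAF}|=1$ and each $C\subseteq\mathcal A$ a set of fuzzy subsets of $\mathcal A$, define recursively for any FAF and $C\subseteq\mathcal A$ the set $\mathcal{GF}_{\mathcal S}(FAF,C)$: a fuzzy set $E\subseteq\mathcal A$ belongs to it iff either $|SCCS_{FAF}|=1$ and $E\in\mathcal{BF}_{\mathcal S}(FAF,C)$, or $|SCCS_{FAF}|\neq1$ and for every $S\in SCCS_{FAF}$, $E\cap S\in\mathcal{GF}_{\mathcal S}(FAF\downarrow_{R_{FAF}(S,E)},D_{FAF}(S,E)\cap C)$. A semantics assigning to each FAF a set of extensions $\mathcal E_{\mathcal S}(FAF)$ is SCC-recursive (with base function $\mathcal{BF}_{\mathcal S}$) iff $\mathcal E_{\mathcal S}(FAF)=\mathcal{GF}_{\mathcal S}(FAF,\mathcal A)$ for every FAF $\langle\mathcal A,\rho\rangle$. *)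

theory Defs
  imports Complex_Main
begin

type_synonym 'a fz = "'a \<Rightarrow> real"

text \<open>A FAF: crisp argument set, fuzzy set of arguments, attack degrees.
  Conventions: the fuzzy set and the attack relation are extended by 0 outside Args.\<close>
record 'a faf =
  args :: "'a set"
  fa   :: "'a \<Rightarrow> real"
  rho  :: "'a \<Rightarrow> 'a \<Rightarrow> real"

definition wf_faf :: "'a faf \<Rightarrow> bool" where
  "wf_faf F \<longleftrightarrow> finite (args F)
     \<and> (\<forall>x. 0 \<le> fa F x \<and> fa F x \<le> 1)
     \<and> (\<forall>x. x \<notin> args F \<longrightarrow> fa F x = 0)
     \<and> (\<forall>x y. 0 \<le> rho F x y \<and> rho F x y \<le> 1)
     \<and> (\<forall>x y. x \<notin> args F \<or> y \<notin> args F \<longrightarrow> rho F x y = 0)"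

definition Supp :: "'a fz \<Rightarrow> 'a set" where
  "Supp S = {x. S x > 0}"

definition fsub :: "'a fz \<Rightarrow> 'a fz \<Rightarrow> bool" where
  "fsub T S \<longleftrightarrow> (\<forall>x. 0 \<le> T x \<and> T x \<le> S x)"

definition fpt_in :: "'a \<Rightarrow> real \<Rightarrow> 'a fz \<Rightarrow> bool" where
  "fpt_in x a S \<longleftrightarrow> 0 < a \<and> a \<le> 1 \<and> a \<le> S x"

definition funion :: "('a \<Rightarrow> real \<Rightarrow> bool) \<Rightarrow> 'a fz" where
  "funion P = (\<lambda>x. Sup (insert 0 {a. P x a}))"

definition sufficient :: "'a faf \<Rightarrow> 'a \<Rightarrow> real \<Rightarrow> 'a \<Rightarrow> real \<Rightarrow> bool" where
  "sufficient F A a B b \<longleftrightarrow> min a (rho F A B) + b > 1"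

definition tolerable :: "'a faf \<Rightarrow> 'a \<Rightarrow> real \<Rightarrow> 'a \<Rightarrow> real \<Rightarrow> bool" where
  "tolerable F A a B b \<longleftrightarrow> min a (rho F A B) + b \<le> 1"

definition weaken :: "'a faf \<Rightarrow> 'a \<Rightarrow> real \<Rightarrow> 'a \<Rightarrow> real \<Rightarrow> real" where
  "weaken F A a B b = min (1 - min a (rho F A B)) b"

definition wdefends :: "'a faf \<Rightarrow> 'a fz \<Rightarrow> 'a \<Rightarrow> real \<Rightarrow> bool" where
  "wdefends F T C c \<longleftrightarrow>
     (\<forall>B b. fpt_in B b (fa F) \<and> sufficient F B b C c \<longrightarrow>
        (\<exists>A' a'. fpt_in A' a' T \<and> tolerable F B (weaken F A' a' B b) C c))"

definition conflict_free :: "'a faf \<Rightarrow> 'a fz \<Rightarrow> bool" where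
  "conflict_free F T \<longleftrightarrow>
     \<not> (\<exists>A a B b. fpt_in A a T \<and> fpt_in B b T \<and> sufficient F A a B b)"

definition admissible :: "'a faf \<Rightarrow> 'a fz \<Rightarrow> bool" where
  "admissible F T \<longleftrightarrow> fsub T (fa F) \<and> conflict_free F T
     \<and> (\<forall>C c. fpt_in C c T \<longrightarrow> wdefends F T C c)"

definition AE :: "'a faf \<Rightarrow> 'a fz \<Rightarrow> 'a fz set" where
  "AE F C = {E. admissible F E \<and> fsub E C}"

definition AE0 :: "'a faf \<Rightarrow> 'a fz set" where
  "AE0 F = {E. admissible F E}"

definition CE :: "'a faf \<Rightarrow> 'a fz \<Rightarrow> 'a fz set" where
  "CE F C = {E \<in> AE F C. \<forall>A a. fpt_in A a C \<and> wdefends F E A a \<longrightarrow> fpt_in A a E}"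

definition PE :: "'a faf \<Rightarrow> 'a fz \<Rightarrow> 'a fz set" where
  "PE F C = {E \<in> AE F C. \<forall>E' \<in> AE F C. fsub E E' \<longrightarrow> E' = E}"

definition Fop :: "'a faf \<Rightarrow> 'a fz \<Rightarrow> 'a fz \<Rightarrow> 'a fz" where
  "Fop F C T = funion (\<lambda>A a. fpt_in A a C \<and> wdefends F T A a)"

definition GE :: "'a faf \<Rightarrow> 'a fz \<Rightarrow> 'a fz" where
  "GE F C = (THE E. Fop F C E = E \<and> (\<forall>E'. Fop F C E' = E' \<longrightarrow> (\<forall>x. E x \<le> E' x)))"

definition attR :: "'a faf \<Rightarrow> ('a \<times> 'a) set" where
  "attR F = {(x, y). x \<in> args F \<and> y \<in> args F \<and> rho F x y > 0}"

definition pequiv :: "'a faf \<Rightarrow> 'a \<Rightarrow> 'a \<Rightarrow> bool" where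
  "pequiv F A B \<longleftrightarrow> A = B \<or> ((A, B) \<in> (attR F)\<^sup>+ \<and> (B, A) \<in> (attR F)\<^sup>+)"

definition SCC :: "'a faf \<Rightarrow> 'a \<Rightarrow> 'a fz" where
  "SCC F A = (\<lambda>B. if pequiv F B A then fa F B else 0)"

definition SCCS :: "'a faf \<Rightarrow> 'a fz set" where
  "SCCS F = SCC F ` args F"

definition outparents :: "'a faf \<Rightarrow> 'a fz \<Rightarrow> 'a fz" where
  "outparents F S = (\<lambda>B. if B \<in> args F \<and> B \<notin> Supp S \<and> (\<exists>A \<in> Supp S. rho F B A > 0)
                          then fa F B else 0)"

definition restrict :: "'a faf \<Rightarrow> 'a fz \<Rightarrow> 'a faf" where
  "restrict F T = \<lparr> args = Supp T, fa = T,
     rho = (\<lambda>x y. if x \<in> Supp T \<and> y \<in> Supp T then rho F x y else 0) \<rparr>"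

definition Lf :: "'a faf \<Rightarrow> 'a fz \<Rightarrow> 'a fz \<Rightarrow> 'a fz" where
  "Lf F S E = (\<lambda>A. if A \<in> Supp S then
       Max (insert 0 ((\<lambda>B. min (min (E B) (outparents F S B)) (rho F B A)) ` args F))
     else 0)"

definition Rf :: "'a faf \<Rightarrow> 'a fz \<Rightarrow> 'a fz \<Rightarrow> 'a fz" where
  "Rf F S E = (\<lambda>A. if A \<in> Supp S then min (fa F A) (1 - Lf F S E A) else 0)"

definition Df :: "'a faf \<Rightarrow> 'a fz \<Rightarrow> 'a fz \<Rightarrow> 'a fz" where
  "Df F S E = funion (\<lambda>A a. fpt_in A a (Rf F S E) \<and>
      (\<forall>B b. fpt_in B b (outparents F S) \<and> sufficient F B b A a \<longrightarrow>
         (\<exists>C c. fpt_in C c E \<and> tolerable F B (weaken F C c B b) A a)))"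

type_synonym 'a basefun = "'a faf \<Rightarrow> 'a fz \<Rightarrow> 'a fz set"

text \<open>The recursion is well-founded for finite frameworks because in the non-base case
  every restricted framework has strictly fewer arguments. We implement it with a fuel
  parameter, and start with fuel = card Args, which always suffices.\<close>
fun GFf :: "nat \<Rightarrow> 'a basefun \<Rightarrow> 'a faf \<Rightarrow> 'a fz \<Rightarrow> 'a fz set" where
  "GFf 0 bf F C = {E. fsub E (fa F) \<and>
      (if card (SCCS F) = 1 then E \<in> bf F C else SCCS F = {})}"
| "GFf (Suc n) bf F C = {E. fsub E (fa F) \<and>
      (if card (SCCS F) = 1 then E \<in> bf F C
       else (\<forall>S \<in> SCCS F. (\<lambda>x. min (E x) (S x)) \<in>
               GFf n bf (restrict F (Rf F S E)) (\<lambda>x. min (Df F S E x) (C x))))}"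

definition GF :: "'a basefun \<Rightarrow> 'a faf \<Rightarrow> 'a fz \<Rightarrow> 'a fz set" where
  "GF bf F C = GFf (card (args F)) bf F C"

definition BF_AE :: "'a basefun" where "BF_AE F C = AE F C"
definition BF_CO :: "'a basefun" where "BF_CO F C = CE F C"
definition BF_PE :: "'a basefun" where "BF_PE F C = PE F C"
definition BF_GR :: "'a basefun" where "BF_GR F C = {GE F C}"

end

theory Submission
  imports Defs
begin

definition gdef :: "'a faf \<Rightarrow> 'a fz \<Rightarrow> 'a fz \<Rightarrow> 'a \<Rightarrow> real \<Rightarrow> bool" where
  "gdef F Att E A a \<longleftrightarrow> (\<forall>B b. fpt_in B b Att \<and> sufficient F B b A a \<longrightarrow>
      (\<exists>C c. fpt_in C c E \<and> tolerable F B (weaken F C c B b) A a))"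

lemma wdefends_gdef: "wdefends F T C c = gdef F (fa F) T C c"
  unfolding wdefends_def gdef_def by simp

lemma Df_gdef: "Df F S E = funion (\<lambda>A a. fpt_in A a (Rf F S E) \<and> gdef F (outparents F S) E A a)"
  unfolding Df_def gdef_def by simp

lemma gdef_mono: "gdef F Att E A a \<Longrightarrow> (\<And>x. E x \<le> E' x) \<Longrightarrow> gdef F Att E' A a"
  unfolding gdef_def fpt_in_def by (meson order_trans)

lemma gdef_mono_att: "gdef F Att E A a \<Longrightarrow> (\<And>B b. fpt_in B b Att' \<Longrightarrow> fpt_in B b Att) \<Longrightarrow> gdef F Att' E A a"
  unfolding gdef_def by blast

lemma W1: "sufficient F B b C c \<Longrightarrow> tolerable F B (weaken F A a B b) C c \<Longrightarrow> sufficient F A a B b"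
  unfolding sufficient_def tolerable_def weaken_def by (auto simp: min_def split: if_splits)

lemma weaken_anti: "a \<le> a' \<Longrightarrow> weaken F A a' B b \<le> weaken F A a B b"
  unfolding weaken_def by (auto simp: min_def)

lemma tol_anti_w: "w \<le> w' \<Longrightarrow> tolerable F B w' C c \<Longrightarrow> tolerable F B w C c"
proof -
  assume a: "w \<le> w'" "tolerable F B w' C c"
  have "min w (rho F B C) \<le> min w' (rho F B C)" using a(1) by simp
  thus ?thesis using a(2) unfolding tolerable_def by linarith
qed

lemma gdef_closed:
  assumes fin: "finite {C. E C > 0}" and E1: "\<And>x. E x \<le> 1"
    and H: "\<And>\<epsilon>. \<epsilon> > 0 \<Longrightarrow> \<exists>a'. c - \<epsilon> < a' \<and> gdef F Att E A a'"
  shows "gdef F Att E A c"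
  unfolding gdef_def
proof (intro allI impI)
  fix B b assume Bb: "fpt_in B b Att \<and> sufficient F B b A c"
  show "\<exists>C c'. fpt_in C c' E \<and> tolerable F B (weaken F C c' B b) A c"
  proof (rule ccontr)
    assume neg: "\<not> ?thesis"
    define K where "K = {C. E C > 0}"
    define t where "t = (\<lambda>C. min (weaken F C (E C) B b) (rho F B A))"
    have tK: "t C + c > 1" if "C \<in> K" for C
    proof -
      have "fpt_in C (E C) E" using that E1[of C] unfolding K_def fpt_in_def by auto
      hence "\<not> tolerable F B (weaken F C (E C) B b) A c" using neg by blast
      thus ?thesis unfolding tolerable_def t_def by simp
    qed
    define d0 where "d0 = min b (rho F B A) + c - 1"
    have d0: "d0 > 0" using Bb unfolding d0_def sufficient_def by simp
    define \<epsilon> where "\<epsilon> = Min (insert d0 ((\<lambda>C. t C + c - 1) ` K))"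
    have finK: "finite K" using fin K_def by simp
    have epos: "\<epsilon> > 0" unfolding \<epsilon>_def using finK d0 tK by (auto simp: Min_gr_iff)
    have ed0: "\<epsilon> \<le> d0" unfolding \<epsilon>_def using finK by simp
    have etK: "\<epsilon> \<le> t C + c - 1" if "C \<in> K" for C unfolding \<epsilon>_def using finK that by simp
    obtain a' where a': "c - \<epsilon> < a'" "gdef F Att E A a'" using H epos by blast
    have "sufficient F B b A a'" using a' ed0 unfolding sufficient_def d0_def by simp
    then obtain C c' where Cc: "fpt_in C c' E" "tolerable F B (weaken F C c' B b) A a'"
      using a'(2) Bb unfolding gdef_def by blast
    have CK: "C \<in> K" using Cc(1) unfolding fpt_in_def K_def by simp
    have "weaken F C (E C) B b \<le> weaken F C c' B b"
      using Cc(1) by (intro weaken_anti) (simp add: fpt_in_def)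
    hence "tolerable F B (weaken F C (E C) B b) A a'" using tol_anti_w[OF _ Cc(2)] by blast
    hence "t C + a' \<le> 1" unfolding tolerable_def t_def by simp
    thus False using etK[OF CK] a'(1) by simp
  qed
qed

lemma funion_upper: "P x a \<Longrightarrow> (\<And>a. P x a \<Longrightarrow> a \<le> 1) \<Longrightarrow> a \<le> funion P x"
  unfolding funion_def by (rule cSup_upper) (auto intro!: bdd_aboveI[of _ 1])

lemma funion_nonneg: "(\<And>a. P x a \<Longrightarrow> a \<le> 1) \<Longrightarrow> 0 \<le> funion P x"
  unfolding funion_def by (rule cSup_upper) (auto intro!: bdd_aboveI[of _ 1])

lemma funion_least: "(\<And>a. P x a \<Longrightarrow> a \<le> z) \<Longrightarrow> 0 \<le> z \<Longrightarrow> funion P x \<le> z"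
  unfolding funion_def by (rule cSup_least) auto

lemma funion_approx:
  assumes "0 < c" "c \<le> funion P x" "\<And>a. P x a \<Longrightarrow> a \<le> 1" "\<epsilon> > 0"
  shows "\<exists>a'. c - \<epsilon> < a' \<and> P x a'"
proof -
  define e where "e = min \<epsilon> c"
  have e: "e > 0" "e \<le> \<epsilon>" "e \<le> c" using assms unfolding e_def by auto
  have "c - e < Sup (insert 0 {a. P x a})" using assms(2) e unfolding funion_def by simp
  then obtain y where y: "y \<in> insert 0 {a. P x a}" "c - e < y"
  proof -
    have "bdd_above (insert 0 {a. P x a})" using assms(3) by (auto intro!: bdd_aboveI[of _ 1])
    hence "\<exists>y\<in>insert 0 {a. P x a}. c - e < y" using less_cSup_iff[of "insert 0 {a. P x a}" "c - e"] \<open>c - e < _\<close> by blast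
    thus ?thesis using that by blast
  qed
  have "y \<noteq> 0" using y e by auto
  hence "P x y" using y by auto
  moreover have "c - \<epsilon> < y" using y e by linarith
  ultimately show ?thesis by blast
qed


abbreviation TS :: "'a fz \<Rightarrow> 'a fz \<Rightarrow> 'a fz" where "TS S E \<equiv> (\<lambda>x. min (E x) (S x))"
abbreviation loc :: "'a faf \<Rightarrow> 'a fz \<Rightarrow> 'a fz \<Rightarrow> 'a faf" where "loc F S E \<equiv> restrict F (Rf F S E)"
abbreviation locC :: "'a faf \<Rightarrow> 'a fz \<Rightarrow> 'a fz \<Rightarrow> 'a fz \<Rightarrow> 'a fz" where
  "locC F S E C \<equiv> (\<lambda>x. min (Df F S E x) (C x))"

lemma restrict_simps[simp]: "args (restrict F T) = Supp T" "fa (restrict F T) = T"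
  "rho (restrict F T) x y = (if x \<in> Supp T \<and> y \<in> Supp T then rho F x y else 0)"
  unfolding restrict_def by auto

lemma pequiv_refl[simp]: "pequiv F A A" unfolding pequiv_def by simp
lemma pequiv_sym: "pequiv F A B \<Longrightarrow> pequiv F B A" unfolding pequiv_def by auto
lemma pequiv_trans: "pequiv F A B \<Longrightarrow> pequiv F B C \<Longrightarrow> pequiv F A C"
  unfolding pequiv_def by (auto intro: trancl_trans)

lemma Supp_iff: "x \<in> Supp S \<longleftrightarrow> S x > 0" unfolding Supp_def by simp

lemma fpt_pos: "fpt_in x a S \<Longrightarrow> 0 < a \<and> a \<le> 1 \<and> a \<le> S x" unfolding fpt_in_def by simp

context
  fixes F :: "'a faf"
  assumes wf: "wf_faf F"
begin

lemma fa_nonneg: "0 \<le> fa F x" using wf unfolding wf_faf_def by simp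
lemma fa_le1: "fa F x \<le> 1" using wf unfolding wf_faf_def by simp
lemma fa_out: "x \<notin> args F \<Longrightarrow> fa F x = 0" using wf unfolding wf_faf_def by simp
lemma fa_pos: "fa F x > 0 \<Longrightarrow> x \<in> args F"
proof (rule ccontr)
  assume "fa F x > 0" "x \<notin> args F"
  thus False using fa_out[of x] by simp
qed
lemma rho_nonneg: "0 \<le> rho F x y" using wf unfolding wf_faf_def by simp
lemma rho_le1: "rho F x y \<le> 1" using wf unfolding wf_faf_def by simp
lemma rho_pos: "rho F x y > 0 \<Longrightarrow> x \<in> args F \<and> y \<in> args F"
proof (rule ccontr)
  assume a: "rho F x y > 0" "\<not> (x \<in> args F \<and> y \<in> args F)"
  have "\<forall>x y. x \<notin> args F \<or> y \<notin> args F \<longrightarrow> rho F x y = 0" using wf unfolding wf_faf_def by blast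
  hence "rho F x y = 0" using a(2) by blast
  thus False using a(1) by simp
qed
lemma fin_args: "finite (args F)" using wf unfolding wf_faf_def by simp

lemma attR_I: "rho F x y > 0 \<Longrightarrow> (x, y) \<in> attR F"
  using rho_pos unfolding attR_def by auto

lemma fsub_fa_pos: "fsub E (fa F) \<Longrightarrow> E x > 0 \<Longrightarrow> x \<in> args F"
proof -
  assume a: "fsub E (fa F)" "E x > 0"
  have "E x \<le> fa F x" using a(1) unfolding fsub_def by blast
  hence "fa F x > 0" using a(2) by linarith
  thus ?thesis by (rule fa_pos)
qed

lemma fsub_fin: "fsub E (fa F) \<Longrightarrow> finite {C. E C > 0}"
proof -
  assume a: "fsub E (fa F)"
  have "{C. E C > 0} \<subseteq> args F" using fsub_fa_pos[OF a] by blast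
  thus ?thesis using fin_args finite_subset by blast
qed

lemma fsub_le1: "fsub E (fa F) \<Longrightarrow> E x \<le> 1"
proof -
  assume a: "fsub E (fa F)"
  have "E x \<le> fa F x" using a(1) unfolding fsub_def by blast
  thus ?thesis using fa_le1[of x] by linarith
qed

lemma fsub_nonneg: "fsub E G \<Longrightarrow> 0 \<le> E x" unfolding fsub_def by simp

lemma fpt_fa_args: "fpt_in x a (fa F) \<Longrightarrow> x \<in> args F"
proof -
  assume a: "fpt_in x a (fa F)"
  hence "fa F x > 0" unfolding fpt_in_def by linarith
  thus ?thesis by (rule fa_pos)
qed

lemma suff_rho: "sufficient F B b C c \<Longrightarrow> c \<le> 1 \<Longrightarrow> rho F B C > 0 \<and> b > 0"
  unfolding sufficient_def by (auto simp: min_def split: if_splits)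

lemma suff_args: "sufficient F B b C c \<Longrightarrow> c \<le> 1 \<Longrightarrow> B \<in> args F \<and> C \<in> args F"
  using suff_rho rho_pos by blast

lemma SCC_val: "SCC F A x = (if pequiv F x A then fa F x else 0)" unfolding SCC_def by simp

lemma Supp_SCC: "x \<in> Supp (SCC F A) \<longleftrightarrow> pequiv F x A \<and> fa F x > 0"
  unfolding Supp_def SCC_def by auto

lemma SCCS_E: "S \<in> SCCS F \<Longrightarrow> \<exists>A\<in>args F. S = SCC F A" unfolding SCCS_def by auto

lemma S_nonneg: "S \<in> SCCS F \<Longrightarrow> 0 \<le> S x"
proof -
  assume "S \<in> SCCS F"
  then obtain A where "S = SCC F A" using SCCS_E by blast
  thus ?thesis using fa_nonneg[of x] unfolding SCC_def by simp
qed

lemma S_in: "S \<in> SCCS F \<Longrightarrow> x \<in> Supp S \<Longrightarrow> S x = fa F x"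
proof -
  assume a: "S \<in> SCCS F" "x \<in> Supp S"
  then obtain A where "S = SCC F A" using SCCS_E by blast
  thus ?thesis using a(2) unfolding SCC_def Supp_def by (auto split: if_splits)
qed

lemma S_out: "S \<in> SCCS F \<Longrightarrow> x \<notin> Supp S \<Longrightarrow> S x = 0"
proof -
  assume a: "S \<in> SCCS F" "x \<notin> Supp S"
  have "0 \<le> S x" using S_nonneg a(1) by blast
  moreover have "\<not> S x > 0" using a(2) unfolding Supp_def by simp
  ultimately show ?thesis by simp
qed

lemma S_supp_fa: "S \<in> SCCS F \<Longrightarrow> x \<in> Supp S \<Longrightarrow> fa F x > 0"
proof -
  assume a: "S \<in> SCCS F" "x \<in> Supp S"
  have "S x = fa F x" using S_in[OF a] .
  moreover have "S x > 0" using a(2) unfolding Supp_def by simp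
  ultimately show ?thesis by simp
qed

lemma S_supp_args: "S \<in> SCCS F \<Longrightarrow> x \<in> Supp S \<Longrightarrow> x \<in> args F"
  using S_supp_fa fa_pos by blast

lemma S_pequiv: "S \<in> SCCS F \<Longrightarrow> x \<in> Supp S \<Longrightarrow> y \<in> Supp S \<Longrightarrow> pequiv F x y"
proof -
  assume a: "S \<in> SCCS F" "x \<in> Supp S" "y \<in> Supp S"
  then obtain A where A: "S = SCC F A" using SCCS_E by blast
  have 1: "pequiv F x A" "pequiv F y A" using a(2,3) unfolding A Supp_SCC by auto
  show ?thesis using pequiv_trans[OF 1(1) pequiv_sym[OF 1(2)]] .
qed

lemma S_closed: "S \<in> SCCS F \<Longrightarrow> x \<in> Supp S \<Longrightarrow> pequiv F y x \<Longrightarrow> fa F y > 0 \<Longrightarrow> y \<in> Supp S"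
proof -
  assume a: "S \<in> SCCS F" "x \<in> Supp S" "pequiv F y x" "fa F y > 0"
  then obtain A where A: "S = SCC F A" using SCCS_E by blast
  have "pequiv F x A" using a(2) unfolding A Supp_SCC by auto
  hence "pequiv F y A" using pequiv_trans[OF a(3)] by blast
  thus ?thesis using a(4) unfolding A Supp_SCC by auto
qed

lemma SCC_own: "fa F x > 0 \<Longrightarrow> SCC F x \<in> SCCS F \<and> x \<in> Supp (SCC F x)"
  using fa_pos Supp_SCC unfolding SCCS_def by auto

lemma TS_in: "S \<in> SCCS F \<Longrightarrow> x \<in> Supp S \<Longrightarrow> fsub E (fa F) \<Longrightarrow> TS S E x = E x"
proof -
  assume a: "S \<in> SCCS F" "x \<in> Supp S" "fsub E (fa F)"
  have "S x = fa F x" using S_in a by blast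
  moreover have "E x \<le> fa F x" using a(3) unfolding fsub_def by simp
  ultimately show ?thesis by simp
qed

lemma TS_out: "S \<in> SCCS F \<Longrightarrow> x \<notin> Supp S \<Longrightarrow> fsub E (fa F) \<Longrightarrow> TS S E x = 0"
proof -
  assume a: "S \<in> SCCS F" "x \<notin> Supp S" "fsub E (fa F)"
  have "S x = 0" using S_out a by blast
  moreover have "0 \<le> E x" using a(3) unfolding fsub_def by simp
  ultimately show ?thesis by simp
qed

lemma TS_le: "S \<in> SCCS F \<Longrightarrow> fsub E (fa F) \<Longrightarrow> TS S E x \<le> E x" by simp

lemma fpt_TS: "S \<in> SCCS F \<Longrightarrow> fsub E (fa F) \<Longrightarrow> fpt_in x a (TS S E) \<longleftrightarrow> x \<in> Supp S \<and> fpt_in x a E"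
proof -
  assume a: "S \<in> SCCS F" "fsub E (fa F)"
  show ?thesis
  proof (cases "x \<in> Supp S")
    case True thus ?thesis using TS_in[OF a(1) True a(2)] by (simp add: fpt_in_def)
  next
    case False thus ?thesis using TS_out[OF a(1) False a(2)] by (simp add: fpt_in_def)
  qed
qed

lemma outp_pos: "outparents F S B > 0 \<Longrightarrow> B \<in> args F \<and> B \<notin> Supp S \<and> (\<exists>A\<in>Supp S. rho F B A > 0) \<and> outparents F S B = fa F B"
  unfolding outparents_def by (auto split: if_splits)

lemma outp_nonneg: "0 \<le> outparents F S B" unfolding outparents_def using fa_nonneg by auto
lemma outp_le: "outparents F S B \<le> fa F B" unfolding outparents_def using fa_nonneg by auto

lemma outp_eq: "A \<in> Supp S \<Longrightarrow> B \<notin> Supp S \<Longrightarrow> rho F B A > 0 \<Longrightarrow> outparents F S B = fa F B"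
  unfolding outparents_def using rho_pos by auto

lemma fpt_outp: "fpt_in B b (outparents F S) \<Longrightarrow> fpt_in B b (fa F) \<and> B \<notin> Supp S \<and> (\<exists>A\<in>Supp S. rho F B A > 0)"
proof -
  assume a: "fpt_in B b (outparents F S)"
  hence p: "outparents F S B > 0" unfolding fpt_in_def by linarith
  from outp_pos[OF p] a show ?thesis unfolding fpt_in_def by auto
qed

lemma fpt_outp_I: "fpt_in B b (fa F) \<Longrightarrow> B \<notin> Supp S \<Longrightarrow> A \<in> Supp S \<Longrightarrow> rho F B A > 0 \<Longrightarrow> fpt_in B b (outparents F S)"
  using outp_eq unfolding fpt_in_def by simp

lemma Lf_in: "A \<in> Supp S \<Longrightarrow> Lf F S E A = Max (insert 0 ((\<lambda>B. min (min (E B) (outparents F S B)) (rho F B A)) ` args F))"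
  unfolding Lf_def by simp

lemma Lf_nonneg: "0 \<le> Lf F S E A"
  unfolding Lf_def using fin_args by auto

lemma Lf_le1: "Lf F S E A \<le> 1"
  unfolding Lf_def using fin_args rho_le1 by (auto simp: min_le_iff_disj)

lemma Lf_ge: "A \<in> Supp S \<Longrightarrow> B \<notin> Supp S \<Longrightarrow> rho F B A > 0 \<Longrightarrow> fsub E (fa F) \<Longrightarrow>
   min (E B) (rho F B A) \<le> Lf F S E A"
proof -
  assume a: "A \<in> Supp S" "B \<notin> Supp S" "rho F B A > 0" "fsub E (fa F)"
  have o: "outparents F S B = fa F B" using outp_eq a by simp
  have "E B \<le> fa F B" using a(4) unfolding fsub_def by simp
  hence "min (E B) (rho F B A) = min (min (E B) (outparents F S B)) (rho F B A)" using o by simp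
  also have "\<dots> \<le> Lf F S E A" unfolding Lf_in[OF a(1)] using fin_args rho_pos[OF a(3)]
    by (intro Max_ge) auto
  finally show ?thesis .
qed

lemma Lf_att: "A \<in> Supp S \<Longrightarrow> Lf F S E A > 0 \<Longrightarrow> fsub E (fa F) \<Longrightarrow>
   \<exists>B. B \<in> args F \<and> B \<notin> Supp S \<and> rho F B A > 0 \<and> E B > 0 \<and> Lf F S E A = min (E B) (rho F B A)"
proof -
  assume a: "A \<in> Supp S" "Lf F S E A > 0" "fsub E (fa F)"
  let ?M = "insert 0 ((\<lambda>B. min (min (E B) (outparents F S B)) (rho F B A)) ` args F)"
  have "Lf F S E A \<in> ?M" unfolding Lf_in[OF a(1)] using fin_args by (intro Max_in) auto
  then obtain B where B: "B \<in> args F" "Lf F S E A = min (min (E B) (outparents F S B)) (rho F B A)"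
    using a(2) by auto
  hence pos: "E B > 0" "outparents F S B > 0" "rho F B A > 0" using a(2) by auto
  have "outparents F S B = fa F B" "B \<notin> Supp S" using outp_pos[OF pos(2)] by auto
  moreover have "E B \<le> fa F B" using a(3) unfolding fsub_def by simp
  ultimately show ?thesis using B pos by (intro exI[of _ B]) auto
qed

lemma Rf_in: "A \<in> Supp S \<Longrightarrow> Rf F S E A = min (fa F A) (1 - Lf F S E A)" unfolding Rf_def by simp
lemma Rf_out: "A \<notin> Supp S \<Longrightarrow> Rf F S E A = 0" unfolding Rf_def by simp
lemma Rf_nonneg: "0 \<le> Rf F S E A" unfolding Rf_def using fa_nonneg Lf_le1 by auto
lemma Rf_le_fa: "Rf F S E A \<le> fa F A" unfolding Rf_def using fa_nonneg by auto
lemma Rf_le1: "Rf F S E A \<le> 1" using Rf_le_fa fa_le1 order_trans by blast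
lemma Rf_le_L: "A \<in> Supp S \<Longrightarrow> Rf F S E A \<le> 1 - Lf F S E A" unfolding Rf_def by simp
lemma Supp_Rf: "x \<in> Supp (Rf F S E) \<Longrightarrow> x \<in> Supp S" unfolding Supp_def Rf_def by (auto split: if_splits)

lemma fsub_Rf: "fsub (Rf F S E) (fa F)" unfolding fsub_def using Rf_nonneg Rf_le_fa by auto

lemma fpt_R_fa: "fpt_in x a (Rf F S E) \<Longrightarrow> fpt_in x a (fa F)"
proof -
  assume "fpt_in x a (Rf F S E)"
  thus ?thesis using Rf_le_fa[of S E x] unfolding fpt_in_def by linarith
qed

lemma fpt_R_supp: "fpt_in x a (Rf F S E) \<Longrightarrow> x \<in> Supp (Rf F S E)"
  unfolding fpt_in_def Supp_def by auto

lemma Df_le_R: "Df F S E x \<le> Rf F S E x"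
  unfolding Df_gdef by (rule funion_least) (auto simp: fpt_in_def Rf_nonneg)

lemma Df_nonneg: "0 \<le> Df F S E x"
  unfolding Df_gdef by (rule funion_nonneg) (auto simp: fpt_in_def)

lemma Df_upper: "fpt_in x a (Rf F S E) \<Longrightarrow> gdef F (outparents F S) E x a \<Longrightarrow> a \<le> Df F S E x"
  unfolding Df_gdef by (rule funion_upper) (auto simp: fpt_in_def)

lemma Df_closed:
  assumes "0 < a" "a \<le> Df F S E x" "fsub E (fa F)"
  shows "fpt_in x a (Rf F S E) \<and> gdef F (outparents F S) E x a"
proof
  show "fpt_in x a (Rf F S E)" using assms Df_le_R[of S E x] Rf_le1[of S E x] unfolding fpt_in_def by auto
  show "gdef F (outparents F S) E x a"
  proof (rule gdef_closed)
    show "finite {C. 0 < E C}" using fsub_fin assms by blast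
    show "E y \<le> 1" for y using fsub_le1 assms by blast
    fix \<epsilon> :: real assume "\<epsilon> > 0"
    from funion_approx[OF assms(1) assms(2)[unfolded Df_gdef] _ this]
    show "\<exists>a'. a - \<epsilon> < a' \<and> gdef F (outparents F S) E x a'" by (auto simp: fpt_in_def)
  qed
qed

lemma wf_restrict: "Supp T \<subseteq> args F \<Longrightarrow> (\<And>x. 0 \<le> T x \<and> T x \<le> 1) \<Longrightarrow> wf_faf (restrict F T)"
proof -
  assume a: "Supp T \<subseteq> args F" "\<And>x. 0 \<le> T x \<and> T x \<le> 1"
  have f: "finite (Supp T)" using a(1) fin_args finite_subset by blast
  have o: "T x = 0" if "x \<notin> Supp T" for x using a(2)[of x] that unfolding Supp_def by simp
  show ?thesis unfolding wf_faf_def restrict_simps using f o a(2) rho_nonneg rho_le1 by simp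
qed

lemma wf_loc: "S \<in> SCCS F \<Longrightarrow> wf_faf (loc F S E)"
  apply (rule wf_restrict)
  using Supp_Rf S_supp_args Rf_nonneg Rf_le1 by blast+

end

lemma suff_restrict: "sufficient (restrict F T) B b C c \<Longrightarrow> c \<le> 1 \<Longrightarrow>
   B \<in> Supp T \<and> C \<in> Supp T \<and> sufficient F B b C c"
  unfolding sufficient_def by (auto simp: min_def split: if_splits)

lemma restrict_eqs: "B \<in> Supp T \<Longrightarrow> C \<in> Supp T \<Longrightarrow>
   sufficient (restrict F T) B b C c = sufficient F B b C c \<and>
   tolerable (restrict F T) B b C c = tolerable F B b C c \<and>
   weaken (restrict F T) B b C c = weaken F B b C c"
  unfolding sufficient_def tolerable_def weaken_def by simp


lemma fsub_trans: "fsub X Y \<Longrightarrow> fsub Y Z \<Longrightarrow> fsub X Z"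
  unfolding fsub_def by (meson order_trans)

lemma not_tol_suff: "\<not> tolerable F B b C c \<longleftrightarrow> sufficient F B b C c"
  unfolding tolerable_def sufficient_def by auto

lemma fpt_mono: "fpt_in x a X \<Longrightarrow> (\<And>y. X y \<le> Y y) \<Longrightarrow> fpt_in x a Y"
  unfolding fpt_in_def by (meson order_trans)

context
  fixes F :: "'a faf"
  assumes wf: "wf_faf F"
begin

lemma cf_le_R:
  assumes S: "S \<in> SCCS F" and E: "fsub E (fa F)" and cf: "conflict_free F E" and A: "A \<in> Supp S"
  shows "E A \<le> Rf F S E A"
proof -
  have "E A \<le> 1 - Lf F S E A"
  proof (rule ccontr)
    assume c: "\<not> ?thesis"
    have E1: "E A \<le> 1" using fsub_le1[OF wf E] .
    hence Lp: "Lf F S E A > 0" using c by simp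
    obtain B where B: "B \<in> args F" "B \<notin> Supp S" "rho F B A > 0" "E B > 0" "Lf F S E A = min (E B) (rho F B A)"
      using Lf_att[OF wf A Lp E] by blast
    have "fpt_in B (E B) E" using B fsub_le1[OF wf E] unfolding fpt_in_def by simp
    moreover have "fpt_in A (E A) E" using c E1 Lf_le1[OF wf, of S E A] unfolding fpt_in_def by simp
    moreover have "sufficient F B (E B) A (E A)" using c B(5) unfolding sufficient_def by simp
    ultimately show False using cf unfolding conflict_free_def by blast
  qed
  moreover have "E A \<le> fa F A" using E unfolding fsub_def by simp
  ultimately show ?thesis unfolding Rf_in[OF wf A] by simp
qed

lemma fsub_TS_R:
  assumes S: "S \<in> SCCS F" and E: "fsub E (fa F)" and cf: "conflict_free F E"
  shows "fsub (TS S E) (Rf F S E)"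
  unfolding fsub_def
proof
  fix x
  show "0 \<le> TS S E x \<and> TS S E x \<le> Rf F S E x"
  proof (cases "x \<in> Supp S")
    case True thus ?thesis using TS_in[OF wf S True E] cf_le_R[OF S E cf True] fsub_nonneg[OF wf E] by simp
  next
    case False thus ?thesis using TS_out[OF wf S False E] Rf_nonneg[OF wf] by simp
  qed
qed

lemma LD:
  assumes S: "S \<in> SCCS F" and E0: "fsub E0 (fa F)" and cf: "conflict_free F E0"
    and X: "fsub X E0" and x: "x \<in> Supp S" and xa: "fpt_in x a (fa F)" and wd: "wdefends F X x a"
  shows "fpt_in x a (Rf F S E0) \<and> gdef F (outparents F S) E0 x a \<and> wdefends (loc F S E0) (TS S X) x a"
proof (intro conjI)
  have XE: "X y \<le> E0 y" for y using X unfolding fsub_def by simp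
  have Xf: "fsub X (fa F)" using fsub_trans[OF X E0] .
  have a1: "a \<le> 1" "0 < a" "a \<le> fa F x" using xa unfolding fpt_in_def by auto
  have "a \<le> 1 - Lf F S E0 x"
  proof (rule ccontr)
    assume c: "\<not> ?thesis"
    hence Lp: "Lf F S E0 x > 0" using a1 by simp
    obtain B where B: "B \<in> args F" "B \<notin> Supp S" "rho F B x > 0" "E0 B > 0" "Lf F S E0 x = min (E0 B) (rho F B x)"
      using Lf_att[OF wf x Lp E0] by blast
    have fB: "fpt_in B (E0 B) (fa F)" using B E0 fsub_le1[OF wf E0] unfolding fpt_in_def fsub_def by simp
    have sB: "sufficient F B (E0 B) x a" using c B(5) unfolding sufficient_def by simp
    obtain A' a' where A': "fpt_in A' a' X" "tolerable F B (weaken F A' a' B (E0 B)) x a"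
      using wd fB sB unfolding wdefends_def by blast
    have "sufficient F A' a' B (E0 B)" using W1[OF sB A'(2)] .
    moreover have "fpt_in A' a' E0" using fpt_mono[OF A'(1) XE] .
    moreover have "fpt_in B (E0 B) E0" using fB B unfolding fpt_in_def by simp
    ultimately show False using cf unfolding conflict_free_def by blast
  qed
  thus "fpt_in x a (Rf F S E0)" using a1 unfolding fpt_in_def Rf_in[OF wf x] by simp
  show "gdef F (outparents F S) E0 x a"
  proof -
    have "gdef F (fa F) E0 x a" using gdef_mono[of F "fa F" X x a E0] wd XE unfolding wdefends_gdef by blast
    moreover have "fpt_in B b (fa F)" if "fpt_in B b (outparents F S)" for B b using fpt_outp[OF wf that] by blast
    ultimately show ?thesis using gdef_mono_att[of F "fa F" E0 x a "outparents F S"] by blast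
  qed
  show "wdefends (loc F S E0) (TS S X) x a"
    unfolding wdefends_def
  proof (intro allI impI)
    fix B b assume Bb: "fpt_in B b (fa (loc F S E0)) \<and> sufficient (loc F S E0) B b x a"
    have BR: "fpt_in B b (Rf F S E0)" using Bb by simp
    have sG: "B \<in> Supp (Rf F S E0)" "x \<in> Supp (Rf F S E0)" "sufficient F B b x a"
      using suff_restrict[of F "Rf F S E0" B b x a] Bb a1(1) by blast+
    have BS: "B \<in> Supp S" using Supp_Rf[OF wf sG(1)] .
    obtain A' a' where A': "fpt_in A' a' X" "tolerable F B (weaken F A' a' B b) x a"
      using wd fpt_R_fa[OF wf BR] sG(3) unfolding wdefends_def by blast
    have sA: "sufficient F A' a' B b" using W1[OF sG(3) A'(2)] .
    have b1: "b \<le> 1" using BR unfolding fpt_in_def by simp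
    have rA: "rho F A' B > 0" using suff_rho[OF wf sA b1] by simp
    have AS: "A' \<in> Supp S"
    proof (rule ccontr)
      assume n: "A' \<notin> Supp S"
      have "min (E0 A') (rho F A' B) \<le> Lf F S E0 B" using Lf_ge[OF wf BS n rA E0] .
      moreover have "a' \<le> E0 A'" using fpt_mono[OF A'(1) XE] unfolding fpt_in_def by simp
      moreover have "b \<le> 1 - Lf F S E0 B" using BR Rf_le_L[OF wf BS, of E0] unfolding fpt_in_def by simp
      ultimately have "min a' (rho F A' B) + b \<le> 1" by (smt (verit) min_le_iff_disj)
      thus False using sA unfolding sufficient_def by simp
    qed
    have fT: "fpt_in A' a' (TS S X)" using fpt_TS[OF wf S Xf] AS A'(1) by simp
    have "a' \<le> Rf F S E0 A'" using fpt_mono[OF A'(1) XE] cf_le_R[OF S E0 cf AS] unfolding fpt_in_def by simp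
    hence AR: "A' \<in> Supp (Rf F S E0)" using A'(1) unfolding fpt_in_def Supp_def by simp
    have tG: "tolerable (loc F S E0) B (weaken (loc F S E0) A' a' B b) x a"
      using restrict_eqs[OF AR sG(1)] restrict_eqs[OF sG(1) sG(2)] A'(2) by simp
    show "\<exists>A' a'. fpt_in A' a' (TS S X) \<and> tolerable (loc F S E0) B (weaken (loc F S E0) A' a' B b) x a"
      by (rule exI[of _ A'], rule exI[of _ a'], rule conjI[OF fT tG])
  qed
qed

lemma LU:
  assumes S: "S \<in> SCCS F" and E0: "fsub E0 (fa F)" and Y: "fsub Y (Rf F S E0)"
    and EX: "\<And>y. E0 y \<le> X y" and YX: "\<And>y. Y y \<le> X y"
    and xa: "fpt_in x a (Rf F S E0)" and gd: "gdef F (outparents F S) E0 x a"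
    and wd: "wdefends (loc F S E0) Y x a"
  shows "wdefends F X x a"
  unfolding wdefends_def
proof (intro allI impI)
  fix B b assume Bb: "fpt_in B b (fa F) \<and> sufficient F B b x a"
  have a1: "a \<le> 1" "0 < a" using xa unfolding fpt_in_def by auto
  have xR: "x \<in> Supp (Rf F S E0)" using fpt_R_supp[OF wf xa] .
  have xS: "x \<in> Supp S" using Supp_Rf[OF wf xR] .
  have rB: "rho F B x > 0" using suff_rho[OF wf _ a1(1)] Bb by blast
  have b1: "0 < b" "b \<le> 1" "b \<le> fa F B" using Bb unfolding fpt_in_def by auto
  have YR: "Y y \<le> Rf F S E0 y" for y using Y unfolding fsub_def by simp
  show "\<exists>A' a'. fpt_in A' a' X \<and> tolerable F B (weaken F A' a' B b) x a"
  proof (cases "B \<in> Supp S")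
    case False
    have "fpt_in B b (outparents F S)" using fpt_outp_I[OF wf _ False xS rB] Bb by blast
    then obtain C c where "fpt_in C c E0" "tolerable F B (weaken F C c B b) x a"
      using gd Bb unfolding gdef_def by blast
    thus ?thesis using fpt_mono[of C c E0 X, OF _ EX] by blast
  next
    case BS: True
    have wdG: "\<And>b'. fpt_in B b' (Rf F S E0) \<Longrightarrow> sufficient F B b' x a \<Longrightarrow>
        \<exists>A' a'. fpt_in A' a' X \<and> tolerable F B (weaken F A' a' B b') x a"
    proof -
      fix b' assume b': "fpt_in B b' (Rf F S E0)" "sufficient F B b' x a"
      have BR: "B \<in> Supp (Rf F S E0)" using fpt_R_supp[OF wf b'(1)] .
      have "sufficient (loc F S E0) B b' x a" using restrict_eqs[OF BR xR] b'(2) by simp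
      then obtain A' a' where A': "fpt_in A' a' Y" "tolerable (loc F S E0) B (weaken (loc F S E0) A' a' B b') x a"
        using wd b'(1) unfolding wdefends_def restrict_simps by blast
      have "A' \<in> Supp (Rf F S E0)" using A'(1) YR[of A'] unfolding fpt_in_def Supp_def by simp
      hence "tolerable F B (weaken F A' a' B b') x a" using A'(2) restrict_eqs[OF _ BR] restrict_eqs[OF BR xR] by simp
      thus "\<exists>A' a'. fpt_in A' a' X \<and> tolerable F B (weaken F A' a' B b') x a"
        using fpt_mono[OF A'(1) YX] by blast
    qed
    show ?thesis
    proof (cases "b \<le> Rf F S E0 B")
      case True
      hence "fpt_in B b (Rf F S E0)" using b1 unfolding fpt_in_def by simp
      thus ?thesis using wdG Bb by blast
    next
      case False
      have RB: "Rf F S E0 B = 1 - Lf F S E0 B" using False b1 unfolding Rf_in[OF wf BS] by (auto simp: min_def)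
      have Lp: "Lf F S E0 B > 0" using False RB b1 by simp
      obtain B' where B': "B' \<in> args F" "B' \<notin> Supp S" "rho F B' B > 0" "E0 B' > 0"
          "Lf F S E0 B = min (E0 B') (rho F B' B)"
        using Lf_att[OF wf BS Lp E0] by blast
      have wB': "weaken F B' (E0 B') B b = Rf F S E0 B"
        using RB B'(5) False unfolding weaken_def by simp
      have fB': "fpt_in B' (E0 B') X" using B'(4) fsub_le1[OF wf E0, of B'] EX[of B'] unfolding fpt_in_def by simp
      show ?thesis
      proof (cases "tolerable F B (Rf F S E0 B) x a")
        case True thus ?thesis using fB' wB' by (intro exI[of _ B'] exI[of _ "E0 B'"]) simp
      next
        case nt: False
        have sR: "sufficient F B (Rf F S E0 B) x a" using not_tol_suff[THEN iffD1, OF nt] .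
        have "Rf F S E0 B > 0" using suff_rho[OF wf sR a1(1)] by simp
        hence "fpt_in B (Rf F S E0 B) (Rf F S E0)" using Rf_le1[OF wf] unfolding fpt_in_def by simp
        then obtain A' a' where A': "fpt_in A' a' X" "tolerable F B (weaken F A' a' B (Rf F S E0 B)) x a"
          using wdG sR by blast
        have lt: "1 - min a' (rho F A' B) < Rf F S E0 B"
        proof (rule ccontr)
          assume "\<not> ?thesis"
          hence "weaken F A' a' B (Rf F S E0 B) = Rf F S E0 B" unfolding weaken_def by simp
          thus False using A'(2) nt by simp
        qed
        hence "weaken F A' a' B b = weaken F A' a' B (Rf F S E0 B)"
          using False unfolding weaken_def by simp
        thus ?thesis using A' by (intro exI[of _ A'] exI[of _ a']) simp
      qed
    qed
  qed
qed

end

lemma AE_parts: "E \<in> AE F C \<longleftrightarrow> fsub E (fa F) \<and> conflict_free F E \<and>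
    (\<forall>C c. fpt_in C c E \<longrightarrow> wdefends F E C c) \<and> fsub E C"
  unfolding AE_def admissible_def by auto

lemma AE_loc_parts: "T \<in> AE (loc F S E) C' \<longleftrightarrow> fsub T (Rf F S E) \<and> conflict_free (loc F S E) T \<and>
    (\<forall>C c. fpt_in C c T \<longrightarrow> wdefends (loc F S E) T C c) \<and> fsub T C'"
  unfolding AE_def admissible_def by simp

lemma fsub_refl: "fsub E G \<Longrightarrow> fsub E E" unfolding fsub_def by simp

lemma fpt_le: "fpt_in x a E \<Longrightarrow> a \<le> E x" unfolding fpt_in_def by simp

context
  fixes F :: "'a faf"
  assumes wf: "wf_faf F"
begin

lemma fpt_fsub: "fpt_in x a E \<Longrightarrow> fsub E G \<Longrightarrow> fpt_in x a G"
  unfolding fsub_def fpt_in_def by (meson order_trans)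

lemma pt_SCC: "fpt_in x a E \<Longrightarrow> fsub E (fa F) \<Longrightarrow> SCC F x \<in> SCCS F \<and> x \<in> Supp (SCC F x)"
proof -
  assume a: "fpt_in x a E" "fsub E (fa F)"
  have "fpt_in x a (fa F)" using fpt_fsub[OF a] .
  hence "fa F x > 0" unfolding fpt_in_def by linarith
  thus ?thesis using SCC_own[OF wf] by blast
qed

lemma AE_dec1:
  assumes EA: "E \<in> AE F C" and S: "S \<in> SCCS F"
  shows "TS S E \<in> AE (loc F S E) (locC F S E C)"
proof -
  have E: "fsub E (fa F)" and cf: "conflict_free F E" and df: "\<And>C c. fpt_in C c E \<Longrightarrow> wdefends F E C c"
    and EC: "fsub E C" using EA unfolding AE_parts by auto
  have EE: "fsub E E" using fsub_refl[OF E] .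
  have 1: "fsub (TS S E) (Rf F S E)" using fsub_TS_R[OF wf S E cf] .
  have 2: "conflict_free (loc F S E) (TS S E)"
    unfolding conflict_free_def
  proof (intro notI, elim exE conjE)
    fix A a B b assume h: "fpt_in A a (TS S E)" "fpt_in B b (TS S E)" "sufficient (loc F S E) A a B b"
    have "sufficient F A a B b" using suff_restrict[OF h(3)] h(2) unfolding fpt_in_def by simp
    moreover have "fpt_in A a E" "fpt_in B b E" using h(1,2) fpt_TS[OF wf S E] by auto
    ultimately show False using cf unfolding conflict_free_def by blast
  qed
  have 3: "wdefends (loc F S E) (TS S E) C c" if h: "fpt_in C c (TS S E)" for C c
  proof -
    have CS: "C \<in> Supp S" and CE: "fpt_in C c E" using h fpt_TS[OF wf S E] by auto
    show ?thesis using LD[OF wf S E cf EE CS fpt_fsub[OF CE E] df[OF CE]] by blast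
  qed
  have 4: "fsub (TS S E) (locC F S E C)"
    unfolding fsub_def
  proof
    fix x
    have n: "0 \<le> TS S E x" using fsub_nonneg[OF wf E] S_nonneg[OF wf S] by simp
    have c: "TS S E x \<le> C x" using EC unfolding fsub_def by (simp add: min.coboundedI1)
    have d: "TS S E x \<le> Df F S E x"
    proof (cases "x \<in> Supp S \<and> E x > 0")
      case True
      have CE: "fpt_in x (E x) E" using True fsub_le1[OF wf E] unfolding fpt_in_def by simp
      have "fpt_in x (E x) (Rf F S E) \<and> gdef F (outparents F S) E x (E x)"
        using LD[OF wf S E cf EE _ fpt_fsub[OF CE E] df[OF CE]] True by blast
      hence "E x \<le> Df F S E x" using Df_upper[OF wf] by blast
      thus ?thesis using TS_in[OF wf S _ E] True by simp
    next
      case False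
      hence "TS S E x \<le> 0" using TS_out[OF wf S _ E] by fastforce
      thus ?thesis using Df_nonneg[OF wf, of S E x] by linarith
    qed
    show "0 \<le> TS S E x \<and> TS S E x \<le> locC F S E C x" using n c d by simp
  qed
  show ?thesis unfolding AE_loc_parts using 1 2 3 4 by blast
qed

lemma AE_dec2:
  assumes Cf: "fsub C (fa F)" and E: "fsub E (fa F)"
    and L: "\<And>S. S \<in> SCCS F \<Longrightarrow> TS S E \<in> AE (loc F S E) (locC F S E C)"
  shows "E \<in> AE F C"
proof -
  have TR: "fsub (TS S E) (Rf F S E)" and Tcf: "conflict_free (loc F S E) (TS S E)"
    and Tdf: "\<And>C c. fpt_in C c (TS S E) \<Longrightarrow> wdefends (loc F S E) (TS S E) C c"
    and TC: "fsub (TS S E) (locC F S E C)" if "S \<in> SCCS F" for S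
    using L[OF that] unfolding AE_loc_parts by auto
  have EC: "fsub E C" unfolding fsub_def
  proof
    fix x
    show "0 \<le> E x \<and> E x \<le> C x"
    proof (cases "E x > 0")
      case True
      have "fpt_in x (E x) E" using True fsub_le1[OF wf E] unfolding fpt_in_def by simp
      then have S: "SCC F x \<in> SCCS F" "x \<in> Supp (SCC F x)" using pt_SCC E by auto
      have "TS (SCC F x) E x \<le> C x" using TC[OF S(1)] unfolding fsub_def by (meson min.boundedE)
      thus ?thesis using TS_in[OF wf S E] True by simp
    next
      case False thus ?thesis using fsub_nonneg[OF wf Cf, of x] fsub_nonneg[OF wf E, of x] by simp
    qed
  qed
  have cf: "conflict_free F E"
    unfolding conflict_free_def
  proof (intro notI, elim exE conjE)
    fix A a B b assume h: "fpt_in A a E" "fpt_in B b E" "sufficient F A a B b"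
    obtain S where S: "S = SCC F B" by blast
    have SS: "S \<in> SCCS F" "B \<in> Supp S" using pt_SCC[OF h(2) E] S by auto
    have BT: "fpt_in B b (TS S E)" using fpt_TS[OF wf SS(1) E] SS h(2) by simp
    have BR: "fpt_in B b (Rf F S E)" using fpt_fsub[OF BT TR[OF SS(1)]] .
    have b1: "b \<le> 1" using h(2) unfolding fpt_in_def by simp
    have rAB: "rho F A B > 0" using suff_rho[OF wf h(3) b1] by simp
    show False
    proof (cases "A \<in> Supp S")
      case True
      have AT: "fpt_in A a (TS S E)" using fpt_TS[OF wf SS(1) E] True h(1) by simp
      have AR: "fpt_in A a (Rf F S E)" using fpt_fsub[OF AT TR[OF SS(1)]] .
      have "sufficient (loc F S E) A a B b"
        using restrict_eqs[OF fpt_R_supp[OF wf AR] fpt_R_supp[OF wf BR]] h(3) by simp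
      thus False using Tcf[OF SS(1)] AT BT unfolding conflict_free_def by blast
    next
      case False
      have "min (E A) (rho F A B) \<le> Lf F S E B" using Lf_ge[OF wf SS(2) False rAB E] .
      moreover have "a \<le> E A" using h(1) unfolding fpt_in_def by simp
      moreover have "b \<le> 1 - Lf F S E B" using fpt_le[OF BR] Rf_le_L[OF wf SS(2), of E] by linarith
      ultimately have "min a (rho F A B) + b \<le> 1" by (smt (verit) min_le_iff_disj)
      thus False using h(3) unfolding sufficient_def by simp
    qed
  qed
  have df: "wdefends F E C c" if h: "fpt_in C c E" for C c
  proof -
    obtain S where S: "S = SCC F C" by blast
    have SS: "S \<in> SCCS F" "C \<in> Supp S" using pt_SCC[OF h E] S by auto
    have CT: "fpt_in C c (TS S E)" using fpt_TS[OF wf SS(1) E] SS h by simp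
    have "c \<le> Df F S E C" using fpt_le[OF fpt_fsub[OF CT TC[OF SS(1)]]] by simp
    hence g: "fpt_in C c (Rf F S E) \<and> gdef F (outparents F S) E C c"
      using Df_closed[OF wf _ _ E] CT unfolding fpt_in_def by blast
    show ?thesis
      using LU[OF wf SS(1) E TR[OF SS(1)] _ _ _ _ Tdf[OF SS(1) CT], of E] g by simp
  qed
  show ?thesis unfolding AE_parts using E cf df EC by blast
qed

lemma AE_dec:
  assumes Cf: "fsub C (fa F)"
  shows "E \<in> AE F C \<longleftrightarrow> fsub E (fa F) \<and> (\<forall>S\<in>SCCS F. TS S E \<in> AE (loc F S E) (locC F S E C))"
  using AE_dec1 AE_dec2[OF Cf] AE_parts by blast

end

definition SU :: "'a faf \<Rightarrow> ('a \<times> 'a) set" where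
  "SU F = {(y, x). y \<in> args F \<and> x \<in> args F \<and> (y, x) \<in> (attR F)\<^sup>+ \<and> (x, y) \<notin> (attR F)\<^sup>+}"

lemma SU_trancl: "(y, x) \<in> (SU F)\<^sup>+ \<Longrightarrow> (y, x) \<in> (attR F)\<^sup>+ \<and> (x, y) \<notin> (attR F)\<^sup>+"
proof (induction rule: trancl_induct)
  case (base z) thus ?case unfolding SU_def by auto
next
  case (step z w)
  have a: "(y, z) \<in> (attR F)\<^sup>+" "(z, y) \<notin> (attR F)\<^sup>+" using step.IH by auto
  have b: "(z, w) \<in> (attR F)\<^sup>+" "(w, z) \<notin> (attR F)\<^sup>+" using step.hyps(2) unfolding SU_def by auto
  have "(y, w) \<in> (attR F)\<^sup>+" using a(1) b(1) by (rule trancl_trans)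
  moreover have "(w, y) \<notin> (attR F)\<^sup>+"
  proof
    assume "(w, y) \<in> (attR F)\<^sup>+"
    hence "(w, z) \<in> (attR F)\<^sup>+" using a(1) by (rule trancl_trans)
    thus False using b(2) by simp
  qed
  ultimately show ?case by simp
qed

lemma wf_SU: "finite (args F) \<Longrightarrow> wf (SU F)"
proof (rule finite_acyclic_wf)
  assume "finite (args F)"
  moreover have "SU F \<subseteq> args F \<times> args F" unfolding SU_def by auto
  ultimately show "finite (SU F)" by (meson finite_SigmaI finite_subset)
  show "acyclic (SU F)" unfolding acyclic_def
  proof (intro allI notI)
    fix x assume "(x, x) \<in> (SU F)\<^sup>+"
    from SU_trancl[OF this] show False by blast
  qed
qed

lemma CE_parts: "E \<in> CE F C \<longleftrightarrow> E \<in> AE F C \<and> (\<forall>A a. fpt_in A a C \<and> wdefends F E A a \<longrightarrow> fpt_in A a E)"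
  unfolding CE_def by simp

lemma PE_parts: "E \<in> PE F C \<longleftrightarrow> E \<in> AE F C \<and> (\<forall>E'\<in>AE F C. fsub E E' \<longrightarrow> E' = E)"
  unfolding PE_def by simp

context
  fixes F :: "'a faf"
  assumes wf: "wf_faf F"
begin

lemma CE_dec:
  assumes Cf: "fsub C (fa F)"
  shows "E \<in> CE F C \<longleftrightarrow> fsub E (fa F) \<and> (\<forall>S\<in>SCCS F. TS S E \<in> CE (loc F S E) (locC F S E C))"
proof
  assume EC: "E \<in> CE F C"
  have EA: "E \<in> AE F C" and cmp: "\<And>A a. fpt_in A a C \<Longrightarrow> wdefends F E A a \<Longrightarrow> fpt_in A a E"
    using EC unfolding CE_parts by auto
  have E: "fsub E (fa F)" and cf: "conflict_free F E" using EA unfolding AE_parts by auto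
  show "fsub E (fa F) \<and> (\<forall>S\<in>SCCS F. TS S E \<in> CE (loc F S E) (locC F S E C))"
  proof (intro conjI ballI E)
    fix S assume S: "S \<in> SCCS F"
    have TA: "TS S E \<in> AE (loc F S E) (locC F S E C)" using AE_dec1[OF wf EA S] .
    have TR: "fsub (TS S E) (Rf F S E)" using TA unfolding AE_loc_parts by blast
    have "fpt_in A a (TS S E)" if h: "fpt_in A a (locC F S E C)" "wdefends (loc F S E) (TS S E) A a" for A a
    proof -
      have aD: "a \<le> Df F S E A" "a \<le> C A" "0 < a" using h(1) unfolding fpt_in_def by auto
      have g: "fpt_in A a (Rf F S E) \<and> gdef F (outparents F S) E A a" using Df_closed[OF wf aD(3) aD(1) E] .
      have AS: "A \<in> Supp S" using Supp_Rf[OF wf fpt_R_supp[OF wf conjunct1[OF g]]] .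
      have "wdefends F E A a"
        using LU[OF wf S E TR _ _ _ _ h(2), of E] g by simp
      moreover have "fpt_in A a C" using h(1) unfolding fpt_in_def by simp
      ultimately have "fpt_in A a E" using cmp by blast
      thus ?thesis using fpt_TS[OF wf S E] AS by simp
    qed
    thus "TS S E \<in> CE (loc F S E) (locC F S E C)" unfolding CE_parts using TA by blast
  qed
next
  assume h: "fsub E (fa F) \<and> (\<forall>S\<in>SCCS F. TS S E \<in> CE (loc F S E) (locC F S E C))"
  have E: "fsub E (fa F)" using h by blast
  have EA: "E \<in> AE F C" using AE_dec2[OF wf Cf E] h unfolding CE_parts by blast
  have cf: "conflict_free F E" using EA unfolding AE_parts by blast
  have "fpt_in A a E" if a: "fpt_in A a C" "wdefends F E A a" for A a
  proof -
    have Af: "fpt_in A a (fa F)" using fpt_fsub[OF wf a(1) Cf] .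
    have S: "SCC F A \<in> SCCS F" "A \<in> Supp (SCC F A)" using pt_SCC[OF wf a(1) Cf] by auto
    have l: "fpt_in A a (Rf F (SCC F A) E) \<and> gdef F (outparents F (SCC F A)) E A a \<and>
        wdefends (loc F (SCC F A) E) (TS (SCC F A) E) A a"
      using LD[OF wf S(1) E cf fsub_refl[OF E] S(2) Af a(2)] .
    have "a \<le> Df F (SCC F A) E A" using Df_upper[OF wf] l by blast
    hence "fpt_in A a (locC F (SCC F A) E C)" using a(1) unfolding fpt_in_def by simp
    hence "fpt_in A a (TS (SCC F A) E)" using h S(1) l unfolding CE_parts by blast
    thus ?thesis using fpt_TS[OF wf S(1) E] by simp
  qed
  thus "E \<in> CE F C" unfolding CE_parts using EA by blast
qed

lemma SU_outp:
  assumes x: "fa F x > 0" and o: "outparents F (SCC F x) B > 0"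
  shows "(B, x) \<in> SU F \<and> (x, B) \<notin> (attR F)\<^sup>+"
proof -
  have op: "B \<in> args F" "B \<notin> Supp (SCC F x)" "\<exists>A\<in>Supp (SCC F x). rho F B A > 0"
    "outparents F (SCC F x) B = fa F B" using outp_pos[OF wf o] by auto
  obtain A where A: "A \<in> Supp (SCC F x)" "rho F B A > 0" using op(3) by blast
  have BA: "(B, A) \<in> attR F" using attR_I[OF wf A(2)] .
  have "pequiv F A x" using A(1) Supp_SCC[OF wf] by blast
  hence "A = x \<or> (A, x) \<in> (attR F)\<^sup>+" unfolding pequiv_def by blast
  hence Bx: "(B, x) \<in> (attR F)\<^sup>+" using BA by (metis trancl.r_into_trancl trancl_into_trancl2)
  have nx: "(x, B) \<notin> (attR F)\<^sup>+"
  proof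
    assume "(x, B) \<in> (attR F)\<^sup>+"
    hence "pequiv F B x" using Bx unfolding pequiv_def by blast
    moreover have "fa F B > 0" using op(4) o by simp
    ultimately have "B \<in> Supp (SCC F x)" using Supp_SCC[OF wf] by blast
    thus False using op(2) by blast
  qed
  have "x \<in> args F" using fa_pos[OF wf x] .
  thus ?thesis using op(1) Bx nx unfolding SU_def by blast
qed

lemma SU_def_att:
  assumes x: "fa F x > 0" and o: "outparents F (SCC F x) B > 0" and r: "rho F C B > 0"
  shows "(C, x) \<in> SU F"
proof -
  have s: "(B, x) \<in> SU F" "(x, B) \<notin> (attR F)\<^sup>+" using SU_outp[OF x o] by auto
  have CB: "(C, B) \<in> attR F" using attR_I[OF wf r] .
  have Bx: "(B, x) \<in> (attR F)\<^sup>+" using s(1) unfolding SU_def by blast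
  have Cx: "(C, x) \<in> (attR F)\<^sup>+" using CB Bx by (rule trancl_into_trancl2)
  have nx: "(x, C) \<notin> (attR F)\<^sup>+"
  proof
    assume "(x, C) \<in> (attR F)\<^sup>+"
    hence "(x, B) \<in> (attR F)\<^sup>+" using CB by (rule trancl_into_trancl)
    thus False using s(2) by blast
  qed
  have "C \<in> args F" "x \<in> args F" using rho_pos[OF wf r] fa_pos[OF wf x] by auto
  thus ?thesis using Cx nx unfolding SU_def by blast
qed

lemma gdef_up:
  assumes x: "fa F x > 0" and eq: "\<And>y. (y, x) \<in> SU F \<Longrightarrow> E y = E' y"
    and g: "gdef F (outparents F (SCC F x)) E A a"
  shows "gdef F (outparents F (SCC F x)) E' A a"
  unfolding gdef_def
proof (intro allI impI)
  fix B b assume h: "fpt_in B b (outparents F (SCC F x)) \<and> sufficient F B b A a"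
  then obtain C c where Cc: "fpt_in C c E" "tolerable F B (weaken F C c B b) A a"
    using g unfolding gdef_def by blast
  have sC: "sufficient F C c B b" using W1[OF conjunct2[OF h] Cc(2)] .
  have b1: "b \<le> 1" using h unfolding fpt_in_def by simp
  have r: "rho F C B > 0" using suff_rho[OF wf sC b1] by simp
  have o: "outparents F (SCC F x) B > 0" using h unfolding fpt_in_def by linarith
  have "E C = E' C" using eq SU_def_att[OF x o r] by blast
  hence "fpt_in C c E'" using Cc(1) unfolding fpt_in_def by simp
  thus "\<exists>C c. fpt_in C c E' \<and> tolerable F B (weaken F C c B b) A a" using Cc(2) by blast
qed

lemma upstream_eq:
  assumes x: "fa F x > 0" and E: "fsub E (fa F)" and E': "fsub E' (fa F)"
    and eq: "\<And>y. (y, x) \<in> SU F \<Longrightarrow> E y = E' y"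
  shows "Rf F (SCC F x) E = Rf F (SCC F x) E' \<and> Df F (SCC F x) E = Df F (SCC F x) E'"
proof -
  let ?S = "SCC F x"
  have L: "Lf F ?S E = Lf F ?S E'"
  proof
    fix A
    show "Lf F ?S E A = Lf F ?S E' A"
    proof (cases "A \<in> Supp ?S")
      case True
      have "(\<lambda>B. min (min (E B) (outparents F ?S B)) (rho F B A)) ` args F =
            (\<lambda>B. min (min (E' B) (outparents F ?S B)) (rho F B A)) ` args F"
      proof (rule image_cong[OF refl])
        fix B
        show "min (min (E B) (outparents F ?S B)) (rho F B A) = min (min (E' B) (outparents F ?S B)) (rho F B A)"
        proof (cases "outparents F ?S B > 0")
          case True
          have "E B = E' B" using eq conjunct1[OF SU_outp[OF x True]] by blast
          thus ?thesis by simp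
        next
          case False
          hence "outparents F ?S B = 0" using outp_nonneg[OF wf, of ?S B] by simp
          thus ?thesis using fsub_nonneg[OF wf E, of B] fsub_nonneg[OF wf E', of B] by simp
        qed
      qed
      thus ?thesis unfolding Lf_in[OF wf True] by simp
    next
      case False thus ?thesis unfolding Lf_def by simp
    qed
  qed
  have R: "Rf F ?S E = Rf F ?S E'" unfolding Rf_def by (subst L) (rule refl)
  have "gdef F (outparents F ?S) E A a = gdef F (outparents F ?S) E' A a" for A a
  proof
    assume "gdef F (outparents F ?S) E A a"
    thus "gdef F (outparents F ?S) E' A a" using gdef_up[OF x, of E E'] eq by blast
  next
    assume g: "gdef F (outparents F ?S) E' A a"
    have eq': "E' y = E y" if "(y, x) \<in> SU F" for y using eq[OF that] by simp
    show "gdef F (outparents F ?S) E A a" using gdef_up[OF x eq' g] .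
  qed
  hence "Df F ?S E = Df F ?S E'" unfolding Df_gdef R by simp
  thus ?thesis using R by simp
qed

lemma SU_induct:
  assumes "\<And>x. x \<in> args F \<Longrightarrow> (\<And>y. (y, x) \<in> SU F \<Longrightarrow> P y) \<Longrightarrow> P x"
  shows "x \<in> args F \<Longrightarrow> P x"
proof (induction x rule: wf_induct_rule[OF wf_SU[OF fin_args[OF wf]]])
  case (1 x)
  show ?case
  proof (rule assms[OF 1(2)])
    fix y assume y: "(y, x) \<in> SU F"
    hence "y \<in> args F" unfolding SU_def by blast
    thus "P y" using 1(1) y by blast
  qed
qed

lemma ext_args:
  assumes "fsub E (fa F)" "fsub E' (fa F)" "\<And>x. x \<in> args F \<Longrightarrow> fa F x > 0 \<Longrightarrow> E x = E' x"
  shows "E = E'"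
proof
  fix x
  show "E x = E' x"
  proof (cases "x \<in> args F \<and> fa F x > 0")
    case True thus ?thesis using assms(3) by blast
  next
    case False
    hence "fa F x \<le> 0" using fa_out[OF wf, of x] by force
    have "0 \<le> E x" "E x \<le> fa F x" "0 \<le> E' x" "E' x \<le> fa F x" using assms(1,2) unfolding fsub_def by auto
    thus ?thesis using \<open>fa F x \<le> 0\<close> by linarith
  qed
qed

end

context
  fixes F :: "'a faf"
  assumes wf: "wf_faf F"
begin

lemma fpt_max: "fpt_in p \<alpha> (\<lambda>x. max (E x) (T x)) \<Longrightarrow> fpt_in p \<alpha> E \<or> fpt_in p \<alpha> T"
  unfolding fpt_in_def by (cases "E p \<le> T p") (auto simp: max_def)

lemma PE_dec1:
  assumes Cf: "fsub C (fa F)" and EP: "E \<in> PE F C" and S: "S \<in> SCCS F"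
  shows "TS S E \<in> PE (loc F S E) (locC F S E C)"
proof -
  have EA: "E \<in> AE F C" and mx: "\<And>E'. E' \<in> AE F C \<Longrightarrow> fsub E E' \<Longrightarrow> E' = E"
    using EP unfolding PE_parts by auto
  have E: "fsub E (fa F)" and cf: "conflict_free F E" and df: "\<And>C c. fpt_in C c E \<Longrightarrow> wdefends F E C c"
    and EC: "fsub E C" using EA unfolding AE_parts by auto
  have TA: "TS S E \<in> AE (loc F S E) (locC F S E C)" using AE_dec1[OF wf EA S] .
  have "T' = TS S E" if T'A: "T' \<in> AE (loc F S E) (locC F S E C)" and TT: "fsub (TS S E) T'" for T'
  proof (rule ccontr)
    assume ne: "T' \<noteq> TS S E"
    have T'R: "fsub T' (Rf F S E)" and T'cf: "conflict_free (loc F S E) T'"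
      and T'df: "\<And>C c. fpt_in C c T' \<Longrightarrow> wdefends (loc F S E) T' C c"
      and T'C: "fsub T' (locC F S E C)" using T'A unfolding AE_loc_parts by auto
    have TleT': "TS S E y \<le> T' y" for y using TT unfolding fsub_def by simp
    have T'supp: "fpt_in p \<alpha> (Rf F S E) \<and> p \<in> Supp (Rf F S E) \<and> p \<in> Supp S" if "fpt_in p \<alpha> T'" for p \<alpha>
    proof -
      have "fpt_in p \<alpha> (Rf F S E)" using fpt_fsub[OF wf that T'R] .
      thus ?thesis using fpt_R_supp[OF wf] Supp_Rf[OF wf] by blast
    qed
    define E' where "E' = (\<lambda>x. max (E x) (T' x))"
    have EE': "E y \<le> E' y" for y unfolding E'_def by simp
    have T'E': "T' y \<le> E' y" for y unfolding E'_def by simp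
    have E'f: "fsub E' (fa F)" unfolding fsub_def E'_def
      using fsub_nonneg[OF wf E] E T'R Rf_le_fa[OF wf] unfolding fsub_def by (meson max.boundedI max.coboundedI1 order_trans)
    have E'C: "fsub E' C" unfolding fsub_def E'_def
      using fsub_nonneg[OF wf E] EC T'C unfolding fsub_def by (meson max.boundedI max.coboundedI1 min.boundedE)
    have E'cf: "conflict_free F E'"
      unfolding conflict_free_def
    proof (intro notI, elim exE conjE)
      fix p \<alpha> q \<beta> assume h: "fpt_in p \<alpha> E'" "fpt_in q \<beta> E'" "sufficient F p \<alpha> q \<beta>"
      have a1: "\<alpha> \<le> 1" "\<beta> \<le> 1" using h unfolding fpt_in_def by auto
      have rpq: "rho F p q > 0" using suff_rho[OF wf h(3) a1(2)] by simp
      have TT': "fpt_in y v T'" if "fpt_in y v E" "y \<in> Supp S" for y v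
      proof -
        have "fpt_in y v (TS S E)" using fpt_TS[OF wf S E] that by simp
        thus ?thesis using fpt_mono[of y v "TS S E" T'] TleT' by blast
      qed
      have both: False if p1: "fpt_in p \<alpha> T'" and q1: "fpt_in q \<beta> T'"
      proof -
        have "sufficient (loc F S E) p \<alpha> q \<beta>"
          using restrict_eqs[of p "Rf F S E" q] T'supp[OF p1] T'supp[OF q1] h(3) by simp
        thus False using T'cf p1 q1 unfolding conflict_free_def by blast
      qed
      consider "fpt_in p \<alpha> E" "fpt_in q \<beta> E" | "fpt_in p \<alpha> T'" "fpt_in q \<beta> T'"
        | "fpt_in p \<alpha> T'" "fpt_in q \<beta> E" | "fpt_in p \<alpha> E" "fpt_in q \<beta> T'"
        using fpt_max[OF h(1)[unfolded E'_def]] fpt_max[OF h(2)[unfolded E'_def]] by blast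
      thus False
      proof cases
        case 1 thus False using cf h(3) unfolding conflict_free_def by blast
      next
        case 2 thus False using both by blast
      next
        case 3
        have pS: "fpt_in p \<alpha> (Rf F S E)" "p \<in> Supp (Rf F S E)" "p \<in> Supp S" using T'supp[OF 3(1)] by auto
        obtain d e where de: "fpt_in d e E" "tolerable F p (weaken F d e p \<alpha>) q \<beta>"
          using df[OF 3(2)] fpt_R_fa[OF wf pS(1)] h(3) unfolding wdefends_def by blast
        have sd: "sufficient F d e p \<alpha>" using W1[OF h(3) de(2)] .
        have rdp: "rho F d p > 0" using suff_rho[OF wf sd a1(1)] by simp
        show False
        proof (cases "d \<in> Supp S")
          case True
          have dT: "fpt_in d e T'" using TT'[OF de(1) True] .
          have "sufficient (loc F S E) d e p \<alpha>"
            using restrict_eqs[of d "Rf F S E" p] T'supp[OF dT] pS(2) sd by simp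
          thus False using T'cf dT 3(1) unfolding conflict_free_def by blast
        next
          case False
          have "min (E d) (rho F d p) \<le> Lf F S E p" using Lf_ge[OF wf pS(3) False rdp E] .
          moreover have "e \<le> E d" using fpt_le[OF de(1)] .
          moreover have "\<alpha> \<le> 1 - Lf F S E p" using fpt_le[OF pS(1)] Rf_le_L[OF wf pS(3), of E] by linarith
          ultimately have "min e (rho F d p) + \<alpha> \<le> 1" by (smt (verit) min_le_iff_disj)
          thus False using sd unfolding sufficient_def by simp
        qed
      next
        case 4
        have qS: "fpt_in q \<beta> (Rf F S E)" "q \<in> Supp (Rf F S E)" "q \<in> Supp S" using T'supp[OF 4(2)] by auto
        show False
        proof (cases "p \<in> Supp S")
          case True
          have p1: "fpt_in p \<alpha> T'" using TT'[OF 4(1) True] .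
          show False using both[OF p1 4(2)] .
        next
          case False
          have "min (E p) (rho F p q) \<le> Lf F S E q" using Lf_ge[OF wf qS(3) False rpq E] .
          moreover have "\<alpha> \<le> E p" using fpt_le[OF 4(1)] .
          moreover have "\<beta> \<le> 1 - Lf F S E q" using fpt_le[OF qS(1)] Rf_le_L[OF wf qS(3), of E] by linarith
          ultimately have "min \<alpha> (rho F p q) + \<beta> \<le> 1" by (smt (verit) min_le_iff_disj)
          thus False using h(3) unfolding sufficient_def by simp
        qed
      qed
    qed
    have E'df: "wdefends F E' q \<beta>" if h: "fpt_in q \<beta> E'" for q \<beta>
    proof -
      consider "fpt_in q \<beta> E" | "fpt_in q \<beta> T'" using fpt_max[OF h[unfolded E'_def]] by blast
      thus ?thesis
      proof cases
        case 1 thus ?thesis using df[OF 1] gdef_mono[of F "fa F" E q \<beta> E'] EE' unfolding wdefends_gdef by blast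
      next
        case 2
        have "\<beta> \<le> Df F S E q" using fpt_le[OF fpt_fsub[OF wf 2 T'C]] by simp
        hence g: "fpt_in q \<beta> (Rf F S E) \<and> gdef F (outparents F S) E q \<beta>"
          using Df_closed[OF wf _ _ E] 2 unfolding fpt_in_def by blast
        show ?thesis using LU[OF wf S E T'R EE' T'E' _ _ T'df[OF 2]] g by blast
      qed
    qed
    have "E' \<in> AE F C" unfolding AE_parts using E'f E'cf E'df E'C by blast
    moreover have "fsub E E'" unfolding fsub_def using EE' fsub_nonneg[OF wf E] by blast
    ultimately have eq: "E' = E" using mx by blast
    obtain y where y: "T' y \<noteq> TS S E y" using ne by blast
    have lt: "TS S E y < T' y" using y TleT'[of y] by simp
    have "0 \<le> E y" "0 \<le> S y" using fsub_nonneg[OF wf E] S_nonneg[OF wf S] by auto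
    hence "0 \<le> TS S E y" by simp
    hence "T' y > 0" using lt by linarith
    hence "y \<in> Supp S" using T'supp[of y "T' y"] fsub_le1[OF wf fsub_trans[OF T'R fsub_Rf[OF wf]]]
      unfolding fpt_in_def by simp
    hence "TS S E y = E y" using TS_in[OF wf S _ E] by simp
    hence "E' y > E y" using lt unfolding E'_def by simp
    thus False using eq by simp
  qed
  thus ?thesis unfolding PE_parts using TA by blast
qed

lemma PE_dec2:
  assumes Cf: "fsub C (fa F)" and E: "fsub E (fa F)"
    and L: "\<And>S. S \<in> SCCS F \<Longrightarrow> TS S E \<in> PE (loc F S E) (locC F S E C)"
  shows "E \<in> PE F C"
proof -
  have EA: "E \<in> AE F C" using AE_dec2[OF wf Cf E] L unfolding PE_parts by blast
  have "E' = E" if E'A: "E' \<in> AE F C" and EE': "fsub E E'" for E'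
  proof -
    have E'f: "fsub E' (fa F)" using E'A unfolding AE_parts by blast
    have step: "E' x = E x" if x: "x \<in> args F" and IH: "\<And>y. (y, x) \<in> SU F \<Longrightarrow> E' y = E y" for x
    proof (cases "fa F x > 0")
      case True
      let ?S = "SCC F x"
      have S: "?S \<in> SCCS F" "x \<in> Supp ?S" using SCC_own[OF wf True] by auto
      have up: "Rf F ?S E = Rf F ?S E' \<and> Df F ?S E = Df F ?S E'"
        using upstream_eq[OF wf True E E'f] IH by metis
      have "TS ?S E' \<in> AE (loc F ?S E') (locC F ?S E' C)" using AE_dec1[OF wf E'A S(1)] .
      hence T'A: "TS ?S E' \<in> AE (loc F ?S E) (locC F ?S E C)" using up by simp
      have "fsub (TS ?S E) (TS ?S E')" unfolding fsub_def
      proof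
        fix y
        have "E y \<le> E' y" "0 \<le> E y" "0 \<le> ?S y"
          using EE' fsub_nonneg[OF wf E] S_nonneg[OF wf S(1)] unfolding fsub_def by auto
        thus "0 \<le> TS ?S E y \<and> TS ?S E y \<le> TS ?S E' y" by (auto simp: min_def)
      qed
      hence "TS ?S E' = TS ?S E" using L[OF S(1)] T'A unfolding PE_parts by blast
      hence "TS ?S E' x = TS ?S E x" using fun_cong[of "TS ?S E'" "TS ?S E" x] by simp
      thus ?thesis using TS_in[OF wf S E] TS_in[OF wf S E'f] by simp
    next
      case False
      have "0 \<le> E x" "E x \<le> fa F x" "0 \<le> E' x" "E' x \<le> fa F x" "0 \<le> fa F x"
        using E E'f fa_nonneg[OF wf, of x] unfolding fsub_def by auto
      thus ?thesis using False by linarith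
    qed
    have "x \<in> args F \<Longrightarrow> E' x = E x" for x
      by (rule SU_induct[OF wf, of "\<lambda>x. E' x = E x"]) (auto intro: step)
    thus "E' = E" using ext_args[OF wf E'f E] by blast
  qed
  thus ?thesis unfolding PE_parts using EA by blast
qed

lemma PE_dec:
  assumes Cf: "fsub C (fa F)"
  shows "E \<in> PE F C \<longleftrightarrow> fsub E (fa F) \<and> (\<forall>S\<in>SCCS F. TS S E \<in> PE (loc F S E) (locC F S E C))"
  using PE_dec1[OF Cf] PE_dec2[OF Cf] unfolding PE_parts AE_parts by blast

end

definition PFP :: "'a faf \<Rightarrow> 'a fz \<Rightarrow> 'a fz set" where
  "PFP F C = {X. fsub X C \<and> (\<forall>x. Fop F C X x \<le> X x)}"

definition lfpm :: "'a faf \<Rightarrow> 'a fz \<Rightarrow> 'a fz" where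
  "lfpm F C = (\<lambda>x. Inf ((\<lambda>X. X x) ` PFP F C))"

lemma Fop_gdef: "Fop F C T = funion (\<lambda>A a. fpt_in A a C \<and> gdef F (fa F) T A a)"
  unfolding Fop_def wdefends_gdef by simp

context
  fixes F :: "'a faf" and C :: "'a fz"
  assumes wf: "wf_faf F" and Cf: "fsub C (fa F)"
begin

lemma Fop_nonneg: "0 \<le> Fop F C T x"
  unfolding Fop_def by (rule funion_nonneg) (simp add: fpt_in_def)

lemma Fop_le_C: "Fop F C T x \<le> C x"
  unfolding Fop_def by (rule funion_least) (auto simp: fpt_in_def fsub_nonneg[OF wf Cf])

lemma Fop_upper: "fpt_in x a C \<Longrightarrow> wdefends F T x a \<Longrightarrow> a \<le> Fop F C T x"
  unfolding Fop_def by (rule funion_upper) (auto simp: fpt_in_def)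

lemma Fop_mono: "(\<And>y. T y \<le> T' y) \<Longrightarrow> Fop F C T x \<le> Fop F C T' x"
proof -
  assume le: "\<And>y. T y \<le> T' y"
  show ?thesis unfolding Fop_def[of F C T]
  proof (rule funion_least)
    fix a assume "fpt_in x a C \<and> wdefends F T x a"
    hence "fpt_in x a C" "wdefends F T' x a"
      using gdef_mono[of F "fa F" T x a T'] le unfolding wdefends_gdef by auto
    thus "a \<le> Fop F C T' x" using Fop_upper by blast
  qed (rule Fop_nonneg)
qed

lemma Fop_closed:
  assumes T: "fsub T (fa F)" and a: "0 < a" "a \<le> Fop F C T x"
  shows "fpt_in x a C \<and> wdefends F T x a"
proof
  have "a \<le> C x" using a Fop_le_C[of T x] by linarith
  moreover have "C x \<le> 1" using fsub_le1[OF wf Cf] .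
  ultimately show "fpt_in x a C" using a unfolding fpt_in_def by simp
  show "wdefends F T x a" unfolding wdefends_gdef
  proof (rule gdef_closed)
    show "finite {C. 0 < T C}" using fsub_fin[OF wf T] .
    show "T y \<le> 1" for y using fsub_le1[OF wf T] .
    fix \<epsilon> :: real assume "\<epsilon> > 0"
    from funion_approx[OF a(1) a(2)[unfolded Fop_gdef] _ this]
    show "\<exists>a'. a - \<epsilon> < a' \<and> gdef F (fa F) T x a'" by (auto simp: fpt_in_def)
  qed
qed

lemma C_PFP: "C \<in> PFP F C"
  unfolding PFP_def using fsub_refl[OF Cf] Fop_le_C by blast

lemma PFP_nonneg: "X \<in> PFP F C \<Longrightarrow> 0 \<le> X x"
  unfolding PFP_def fsub_def by simp

lemma lfpm_le: "X \<in> PFP F C \<Longrightarrow> lfpm F C x \<le> X x"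
proof -
  assume X: "X \<in> PFP F C"
  have "bdd_below ((\<lambda>X. X x) ` PFP F C)" by (rule bdd_belowI[of _ 0]) (auto simp: PFP_nonneg)
  thus ?thesis unfolding lfpm_def by (rule cInf_lower[OF imageI[OF X]])
qed

lemma lfpm_ge: "(\<And>X. X \<in> PFP F C \<Longrightarrow> z \<le> X x) \<Longrightarrow> z \<le> lfpm F C x"
  unfolding lfpm_def using C_PFP by (intro cInf_greatest) auto

lemma lfpm_props: "Fop F C (lfpm F C) = lfpm F C \<and> fsub (lfpm F C) C"
proof -
  let ?m = "lfpm F C"
  have nn: "0 \<le> ?m x" for x using lfpm_ge PFP_nonneg by blast
  have mC: "?m x \<le> C x" for x using lfpm_le[OF C_PFP] .
  have le1: "Fop F C ?m x \<le> ?m x" for x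
  proof (rule lfpm_ge)
    fix X assume X: "X \<in> PFP F C"
    have "Fop F C ?m x \<le> Fop F C X x" using Fop_mono lfpm_le[OF X] by blast
    also have "\<dots> \<le> X x" using X unfolding PFP_def by blast
    finally show "Fop F C ?m x \<le> X x" .
  qed
  have "Fop F C ?m \<in> PFP F C"
    unfolding PFP_def fsub_def
  proof (intro CollectI conjI allI)
    fix x
    show "0 \<le> Fop F C ?m x" "Fop F C ?m x \<le> C x" using Fop_nonneg Fop_le_C by auto
    show "Fop F C (Fop F C ?m) x \<le> Fop F C ?m x" using Fop_mono[of "Fop F C ?m" ?m x] le1 by blast
  qed
  hence le2: "?m x \<le> Fop F C ?m x" for x using lfpm_le by blast
  have "Fop F C ?m = ?m" using le1 le2 by (intro ext order.antisym) auto
  moreover have "fsub ?m C" unfolding fsub_def using nn mC by blast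
  ultimately show ?thesis by blast
qed

lemma GE_lfpm: "GE F C = lfpm F C"
  unfolding GE_def
proof (rule the_equality)
  let ?m = "lfpm F C"
  have fix_PFP: "E' \<in> PFP F C" if fx: "Fop F C E' = E'" for E'
    unfolding PFP_def fsub_def
  proof (intro CollectI conjI allI)
    fix x
    show "0 \<le> E' x" "E' x \<le> C x" using Fop_nonneg[of E' x] Fop_le_C[of E' x] fx by auto
    show "Fop F C E' x \<le> E' x" using fx by simp
  qed
  have mfix: "Fop F C ?m = ?m" using lfpm_props by blast
  show "Fop F C ?m = ?m \<and> (\<forall>E'. Fop F C E' = E' \<longrightarrow> (\<forall>x. ?m x \<le> E' x))"
  proof (intro conjI allI impI mfix)
    fix E' x assume "Fop F C E' = E'"
    thus "?m x \<le> E' x" using lfpm_le[OF fix_PFP] by blast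
  qed
  fix E assume E: "Fop F C E = E \<and> (\<forall>E'. Fop F C E' = E' \<longrightarrow> (\<forall>x. E x \<le> E' x))"
  have "E x \<le> ?m x" for x using E mfix by blast
  moreover have "?m x \<le> E x" for x using lfpm_le[OF fix_PFP[of E]] E by blast
  ultimately show "E = ?m" by (intro ext order.antisym)
qed

lemma GE_fix: "Fop F C (GE F C) = GE F C" using lfpm_props GE_lfpm by simp
lemma GE_fsub: "fsub (GE F C) C" using lfpm_props GE_lfpm by simp
lemma GE_least: "fsub Y C \<Longrightarrow> (\<And>x. Fop F C Y x \<le> Y x) \<Longrightarrow> GE F C x \<le> Y x"
  unfolding GE_lfpm by (rule lfpm_le) (auto simp: PFP_def)

lemma GE_fa: "fsub (GE F C) (fa F)" using fsub_trans[OF GE_fsub Cf] .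

lemma GE_cf: "conflict_free F (GE F C)"
proof -
  let ?g = "GE F C"
  have gf: "fsub ?g (fa F)" using GE_fa .
  define P where "P = (\<lambda>x a. fpt_in x a ?g \<and> (\<forall>B b. fpt_in B b ?g \<longrightarrow> \<not> sufficient F B b x a))"
  define Y where "Y = funion P"
  have Pb: "P x a \<Longrightarrow> a \<le> 1" for x a unfolding P_def fpt_in_def by simp
  have Yg: "Y x \<le> ?g x" for x unfolding Y_def
    by (rule funion_least) (auto simp: P_def fpt_in_def fsub_nonneg[OF wf gf])
  have Yn: "0 \<le> Y x" for x unfolding Y_def by (rule funion_nonneg) (rule Pb)
  have Ycl: "\<not> sufficient F B b x a" if Yh: "0 < a" "a \<le> Y x" "fpt_in B b ?g" for x a B b
  proof
    assume s: "sufficient F B b x a"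
    define d where "d = min b (rho F B x) + a - 1"
    have dp: "d > 0" using s unfolding sufficient_def d_def by simp
    obtain a' where a': "a - d < a'" "P x a'" using funion_approx[OF Yh(1) Yh(2)[unfolded Y_def] Pb[of x] dp] by blast
    have "sufficient F B b x a'" using a'(1) unfolding sufficient_def d_def by simp
    thus False using a'(2) Yh(3) unfolding P_def by blast
  qed
  have gdefd: "wdefends F ?g B b" if "fpt_in B b ?g" for B b
  proof -
    have "0 < b" "b \<le> Fop F C ?g B" using that GE_fix unfolding fpt_in_def by auto
    thus ?thesis using Fop_closed[OF gf, of b B] by blast
  qed
  have FY: "Fop F C Y x \<le> Y x" for x
    unfolding Fop_def[of F C Y]
  proof (rule funion_least)
    fix a assume h: "fpt_in x a C \<and> wdefends F Y x a"
    have wg: "wdefends F ?g x a" using h gdef_mono[of F "fa F" Y x a ?g] Yg unfolding wdefends_gdef by blast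
    have "a \<le> Fop F C ?g x" using Fop_upper h wg by blast
    hence ag: "fpt_in x a ?g" using h GE_fix unfolding fpt_in_def by simp
    have na: "\<not> sufficient F B b x a" if Bb: "fpt_in B b ?g" for B b
    proof
      assume s: "sufficient F B b x a"
      have "fpt_in B b (fa F)" using fpt_fsub[OF wf Bb gf] .
      then obtain d e where de: "fpt_in d e Y" "tolerable F B (weaken F d e B b) x a"
        using h s unfolding wdefends_def by blast
      have sd: "sufficient F d e B b" using W1[OF s de(2)] .
      have dg: "fpt_in d e ?g" using fpt_mono[of d e Y ?g] de(1) Yg by blast
      obtain d' e' where d': "fpt_in d' e' ?g" "tolerable F d (weaken F d' e' d e) B b"
        using gdefd[OF Bb] fpt_fsub[OF wf dg gf] sd unfolding wdefends_def by blast
      have "sufficient F d' e' d e" using W1[OF sd d'(2)] .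
      moreover have "\<not> sufficient F d' e' d e" using Ycl[of e d d' e'] de(1) d'(1) unfolding fpt_in_def by simp
      ultimately show False by simp
    qed
    show "a \<le> Y x" unfolding Y_def by (rule funion_upper) (use ag na Pb in \<open>auto simp: P_def\<close>)
  qed (rule Yn)
  have YC: "fsub Y C" unfolding fsub_def
  proof
    fix x
    have "?g x \<le> C x" using GE_fsub unfolding fsub_def by blast
    thus "0 \<le> Y x \<and> Y x \<le> C x" using Yn[of x] Yg[of x] by linarith
  qed
  have gY: "?g x \<le> Y x" for x using GE_least[OF YC FY] .
  show ?thesis unfolding conflict_free_def
  proof (intro notI, elim exE conjE)
    fix A a B b assume h: "fpt_in A a ?g" "fpt_in B b ?g" "sufficient F A a B b"
    have "b \<le> Y B" using h(2) gY[of B] unfolding fpt_in_def by simp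
    thus False using Ycl[of b B A a] h unfolding fpt_in_def by simp
  qed
qed

lemma GE_CE: "GE F C \<in> CE F C"
proof -
  let ?g = "GE F C"
  have df: "wdefends F ?g x a" if "fpt_in x a ?g" for x a
  proof -
    have "0 < a" "a \<le> Fop F C ?g x" using that GE_fix unfolding fpt_in_def by auto
    thus ?thesis using Fop_closed[OF GE_fa] by blast
  qed
  have "?g \<in> AE F C" unfolding AE_parts using GE_fa GE_cf df GE_fsub by blast
  moreover have "fpt_in A a ?g" if "fpt_in A a C" "wdefends F ?g A a" for A a
    using Fop_upper[OF that] GE_fix that(1) unfolding fpt_in_def by simp
  ultimately show ?thesis unfolding CE_parts by blast
qed

lemma GE_le_CE: "E \<in> CE F C \<Longrightarrow> GE F C x \<le> E x"
proof -
  assume E: "E \<in> CE F C"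
  have EC: "fsub E C" using E unfolding CE_parts AE_parts by blast
  have "Fop F C E y \<le> E y" for y unfolding Fop_def
    by (rule funion_least) (use E fsub_nonneg[OF wf EC] in \<open>auto simp: CE_parts fpt_in_def\<close>)
  thus ?thesis using GE_least[OF EC] by blast
qed

end

context
  fixes F :: "'a faf"
  assumes wf: "wf_faf F"
begin

lemma locC_fsub: "fsub C (fa F) \<Longrightarrow> fsub (locC F S E C) (Rf F S E)"
proof -
  assume Cf: "fsub C (fa F)"
  show ?thesis unfolding fsub_def
  proof
    fix x
    have "0 \<le> Df F S E x" "Df F S E x \<le> Rf F S E x" "0 \<le> C x"
      using Df_nonneg[OF wf] Df_le_R[OF wf] fsub_nonneg[OF wf Cf] by auto
    thus "0 \<le> locC F S E C x \<and> locC F S E C x \<le> Rf F S E x" by simp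
  qed
qed

lemma GE_dec1:
  assumes Cf: "fsub C (fa F)" and S: "S \<in> SCCS F"
  shows "TS S (GE F C) = GE (loc F S (GE F C)) (locC F S (GE F C) C)"
proof -
  let ?g = "GE F C"
  let ?G = "loc F S ?g" and ?C' = "locC F S ?g C"
  let ?m = "GE ?G ?C'"
  have gf: "fsub ?g (fa F)" using GE_fa[OF wf Cf] .
  have gcf: "conflict_free F ?g" using GE_cf[OF wf Cf] .
  have gfix: "Fop F C ?g = ?g" using GE_fix[OF wf Cf] .
  have wfG: "wf_faf ?G" using wf_loc[OF wf S] .
  have C'f: "fsub ?C' (fa ?G)" using locC_fsub[OF Cf] by simp
  have mfix: "Fop ?G ?C' ?m = ?m" using GE_fix[OF wfG C'f] .
  have mf: "fsub ?m ?C'" using GE_fsub[OF wfG C'f] .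
  have mn: "0 \<le> ?m y" for y using mf unfolding fsub_def by blast
  have TCE: "TS S ?g \<in> CE ?G ?C'" using CE_dec[OF wf Cf] GE_CE[OF wf Cf] S by blast
  have le1: "?m y \<le> TS S ?g y" for y using GE_le_CE[OF wfG C'f TCE] .
  define X where "X = (\<lambda>x. if x \<in> Supp S then min (?g x) (?m x) else ?g x)"
  have Xg: "X y \<le> ?g y" for y unfolding X_def by simp
  have Xn: "0 \<le> X y" for y unfolding X_def using fsub_nonneg[OF wf gf] mn by simp
  have Xsub: "fsub X ?g" unfolding fsub_def using Xg Xn by blast
  have XC: "fsub X C" using fsub_trans[OF Xsub GE_fsub[OF wf Cf]] .
  have TXm: "TS S X y \<le> ?m y" for y
  proof (cases "y \<in> Supp S")
    case True thus ?thesis unfolding X_def by simp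
  next
    case False
    hence "S y = 0" using S_out[OF wf S] by blast
    thus ?thesis using Xn[of y] mn[of y] by simp
  qed
  have FX: "Fop F C X x \<le> X x" for x
  proof -
    have 1: "Fop F C X x \<le> ?g x" using Fop_mono[OF wf Cf, of X "GE F C" x] Xg gfix by simp
    show ?thesis
    proof (cases "x \<in> Supp S")
      case False thus ?thesis using 1 unfolding X_def by simp
    next
      case xS: True
      have "Fop F C X x \<le> ?m x" unfolding Fop_def[of F C X]
      proof (rule funion_least)
        fix a assume h: "fpt_in x a C \<and> wdefends F X x a"
        have l: "fpt_in x a (Rf F S ?g) \<and> gdef F (outparents F S) ?g x a \<and> wdefends ?G (TS S X) x a"
          using LD[OF wf S gf gcf Xsub xS fpt_fsub[OF wf _ Cf]] h by blast
        have wm: "wdefends ?G ?m x a"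
          using l gdef_mono[of ?G "fa ?G" "TS S X" x a ?m] TXm unfolding wdefends_gdef by blast
        have "a \<le> Df F S ?g x" using Df_upper[OF wf] l by blast
        hence "fpt_in x a ?C'" using h unfolding fpt_in_def by simp
        hence "a \<le> Fop ?G ?C' ?m x" using Fop_upper[OF wfG C'f _ wm] by blast
        thus "a \<le> ?m x" using mfix by simp
      qed (rule mn)
      thus ?thesis using 1 xS unfolding X_def by simp
    qed
  qed
  have gX: "?g y \<le> X y" for y using GE_least[OF wf Cf XC FX] .
  have le2: "TS S ?g y \<le> ?m y" for y
  proof (cases "y \<in> Supp S")
    case True
    have "?g y \<le> ?m y" using gX[of y] True unfolding X_def by simp
    thus ?thesis by simp
  next
    case False
    hence "S y = 0" using S_out[OF wf S] by blast
    thus ?thesis using fsub_nonneg[OF wf gf, of y] mn[of y] by simp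
  qed
  show ?thesis using le1 le2 by (intro ext order.antisym)
qed

lemma GE_dec2:
  assumes Cf: "fsub C (fa F)" and E: "fsub E (fa F)"
    and L: "\<And>S. S \<in> SCCS F \<Longrightarrow> TS S E = GE (loc F S E) (locC F S E C)"
  shows "E = GE F C"
proof -
  let ?g = "GE F C"
  have gf: "fsub ?g (fa F)" using GE_fa[OF wf Cf] .
  have step: "E x = ?g x" if x: "x \<in> args F" and IH: "\<And>y. (y, x) \<in> SU F \<Longrightarrow> E y = ?g y" for x
  proof (cases "fa F x > 0")
    case True
    let ?S = "SCC F x"
    have S: "?S \<in> SCCS F" "x \<in> Supp ?S" using SCC_own[OF wf True] by auto
    have up: "Rf F ?S E = Rf F ?S ?g \<and> Df F ?S E = Df F ?S ?g"
      using upstream_eq[OF wf True E gf] IH by metis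
    have "TS ?S E = GE (loc F ?S E) (locC F ?S E C)" using L[OF S(1)] .
    also have "\<dots> = GE (loc F ?S ?g) (locC F ?S ?g C)" using up by simp
    also have "\<dots> = TS ?S ?g" using GE_dec1[OF Cf S(1)] by simp
    finally have "TS ?S E x = TS ?S ?g x" using fun_cong[of "TS ?S E" "TS ?S ?g" x] by simp
    thus ?thesis using TS_in[OF wf S E] TS_in[OF wf S gf] by simp
  next
    case False
    have "0 \<le> E x" "E x \<le> fa F x" "0 \<le> ?g x" "?g x \<le> fa F x" "0 \<le> fa F x"
      using E gf fa_nonneg[OF wf, of x] unfolding fsub_def by auto
    thus ?thesis using False by linarith
  qed
  have "x \<in> args F \<Longrightarrow> E x = ?g x" for x
    by (rule SU_induct[OF wf, of "\<lambda>x. E x = ?g x"]) (auto intro: step)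
  thus ?thesis using ext_args[OF wf E gf] by blast
qed

lemma GE_dec:
  assumes Cf: "fsub C (fa F)"
  shows "E \<in> {GE F C} \<longleftrightarrow> fsub E (fa F) \<and> (\<forall>S\<in>SCCS F. TS S E \<in> {GE (loc F S E) (locC F S E C)})"
proof
  assume "E \<in> {GE F C}"
  hence e: "E = GE F C" by simp
  show "fsub E (fa F) \<and> (\<forall>S\<in>SCCS F. TS S E \<in> {GE (loc F S E) (locC F S E C)})"
  proof (intro conjI ballI)
    show "fsub E (fa F)" using GE_fa[OF wf Cf] e by simp
    fix S assume S: "S \<in> SCCS F"
    show "TS S E \<in> {GE (loc F S E) (locC F S E C)}" using GE_dec1[OF Cf S] e by simp
  qed
next
  assume h: "fsub E (fa F) \<and> (\<forall>S\<in>SCCS F. TS S E \<in> {GE (loc F S E) (locC F S E C)})"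
  have "E = GE F C" by (rule GE_dec2[OF Cf]) (use h in auto)
  thus "E \<in> {GE F C}" by simp
qed

lemma card_loc:
  assumes S: "S \<in> SCCS F" and c: "card (SCCS F) \<noteq> 1"
  shows "card (Supp (Rf F S E)) < card (args F)"
proof -
  have sub1: "Supp (Rf F S E) \<subseteq> Supp S" using Supp_Rf[OF wf] by blast
  have sub2: "Supp S \<subseteq> args F" using S_supp_args[OF wf S] by blast
  obtain A where A: "A \<in> args F" "S = SCC F A" using SCCS_E[OF wf S] by blast
  have ne: "Supp S \<noteq> args F"
  proof
    assume eq: "Supp S = args F"
    have fin: "finite (SCCS F)" unfolding SCCS_def using fin_args[OF wf] by simp
    have "SCCS F \<noteq> {S}" using c by auto
    then obtain S' where S': "S' \<in> SCCS F" "S' \<noteq> S" using S by blast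
    obtain A' where A': "A' \<in> args F" "S' = SCC F A'" using SCCS_E[OF wf S'(1)] by blast
    have "A' \<in> Supp (SCC F A)" using eq A A' by simp
    hence pA: "pequiv F A' A" using Supp_SCC[OF wf] by blast
    have "SCC F A' = SCC F A"
    proof
      fix B
      have "pequiv F B A' \<longleftrightarrow> pequiv F B A"
        using pequiv_trans[OF _ pA] pequiv_trans[OF _ pequiv_sym[OF pA]] by blast
      thus "SCC F A' B = SCC F A B" unfolding SCC_def by simp
    qed
    thus False using S' A A' by simp
  qed
  have "Supp S \<subset> args F" using sub2 ne by blast
  hence "card (Supp S) < card (args F)" using psubset_card_mono fin_args[OF wf] by blast
  moreover have "card (Supp (Rf F S E)) \<le> card (Supp S)"
    using card_mono[OF finite_subset[OF sub2 fin_args[OF wf]] sub1] .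
  ultimately show ?thesis by simp
qed

end

lemma GFf_eq:
  assumes a: "\<And>F C E. wf_faf F \<Longrightarrow> fsub C (fa F) \<Longrightarrow> E \<in> bf F C \<Longrightarrow> fsub E (fa F)"
    and b: "\<And>F C E. wf_faf F \<Longrightarrow> fsub C (fa F) \<Longrightarrow>
       E \<in> bf F C \<longleftrightarrow> fsub E (fa F) \<and> (\<forall>S\<in>SCCS F. TS S E \<in> bf (loc F S E) (locC F S E C))"
  shows "wf_faf F \<Longrightarrow> fsub C (fa F) \<Longrightarrow> card (args F) \<le> n \<Longrightarrow> GFf n bf F C = bf F C"
proof (induction n arbitrary: F C)
  case 0
  have "args F = {}" using 0 fin_args[OF 0(1)] by simp
  hence "SCCS F = {}" unfolding SCCS_def by simp
  thus ?case using b[OF 0(1) 0(2)] by auto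
next
  case (Suc n)
  show ?case
  proof (cases "card (SCCS F) = 1")
    case True thus ?thesis using a[OF Suc.prems(1,2)] by auto
  next
    case False
    have IH: "GFf n bf (loc F S E) (locC F S E C) = bf (loc F S E) (locC F S E C)" if S: "S \<in> SCCS F" for S E
    proof (rule Suc.IH)
      show "wf_faf (loc F S E)" using wf_loc[OF Suc.prems(1) S] .
      show "fsub (locC F S E C) (fa (loc F S E))" using locC_fsub[OF Suc.prems(1,2)] by simp
      show "card (args (loc F S E)) \<le> n" using card_loc[OF Suc.prems(1) S False, of E] Suc.prems(3) by simp
    qed
    have "GFf (Suc n) bf F C = {E. fsub E (fa F) \<and> (\<forall>S\<in>SCCS F. TS S E \<in> bf (loc F S E) (locC F S E C))}"
      using False IH by auto
    also have "\<dots> = bf F C" using b[OF Suc.prems(1,2)] by blast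
    finally show ?thesis .
  qed
qed

theorem mainTheorem8:
  fixes F :: "'a faf"
  assumes "wf_faf F"
  shows "AE0 F = GF BF_AE F (fa F)
       \<and> CE F (fa F) = GF BF_CO F (fa F)
       \<and> PE F (fa F) = GF BF_PE F (fa F)
       \<and> {GE F (fa F)} = GF BF_GR F (fa F)"
proof -
  have wf: "wf_faf F" by fact
  have faf: "fsub (fa F) (fa F)" unfolding fsub_def using fa_nonneg[OF wf] by simp
  have n: "card (args F) \<le> card (args F)" by simp
  have 1: "GF BF_AE F (fa F) = BF_AE F (fa F)" unfolding GF_def
  proof (rule GFf_eq[OF _ _ wf faf n])
    fix F' :: "'a faf" and C E assume "E \<in> BF_AE F' C"
    thus "fsub E (fa F')" unfolding BF_AE_def AE_parts by blast
  next
    fix F' :: "'a faf" and C E assume w: "wf_faf F'" and c: "fsub C (fa F')"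
    show "E \<in> BF_AE F' C \<longleftrightarrow> fsub E (fa F') \<and> (\<forall>S\<in>SCCS F'. TS S E \<in> BF_AE (loc F' S E) (locC F' S E C))"
      unfolding BF_AE_def using AE_dec[OF w c] .
  qed
  have 2: "GF BF_CO F (fa F) = BF_CO F (fa F)" unfolding GF_def
  proof (rule GFf_eq[OF _ _ wf faf n])
    fix F' :: "'a faf" and C E assume "E \<in> BF_CO F' C"
    thus "fsub E (fa F')" unfolding BF_CO_def CE_parts AE_parts by blast
  next
    fix F' :: "'a faf" and C E assume w: "wf_faf F'" and c: "fsub C (fa F')"
    show "E \<in> BF_CO F' C \<longleftrightarrow> fsub E (fa F') \<and> (\<forall>S\<in>SCCS F'. TS S E \<in> BF_CO (loc F' S E) (locC F' S E C))"
      unfolding BF_CO_def using CE_dec[OF w c] .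
  qed
  have 3: "GF BF_PE F (fa F) = BF_PE F (fa F)" unfolding GF_def
  proof (rule GFf_eq[OF _ _ wf faf n])
    fix F' :: "'a faf" and C E assume "E \<in> BF_PE F' C"
    thus "fsub E (fa F')" unfolding BF_PE_def PE_parts AE_parts by blast
  next
    fix F' :: "'a faf" and C E assume w: "wf_faf F'" and c: "fsub C (fa F')"
    show "E \<in> BF_PE F' C \<longleftrightarrow> fsub E (fa F') \<and> (\<forall>S\<in>SCCS F'. TS S E \<in> BF_PE (loc F' S E) (locC F' S E C))"
      unfolding BF_PE_def using PE_dec[OF w c] .
  qed
  have 4: "GF BF_GR F (fa F) = BF_GR F (fa F)" unfolding GF_def
  proof (rule GFf_eq[OF _ _ wf faf n])
    fix F' :: "'a faf" and C E assume w: "wf_faf F'" and c: "fsub C (fa F')" and "E \<in> BF_GR F' C"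
    thus "fsub E (fa F')" unfolding BF_GR_def using GE_fa[OF w c] by simp
  next
    fix F' :: "'a faf" and C E assume w: "wf_faf F'" and c: "fsub C (fa F')"
    show "E \<in> BF_GR F' C \<longleftrightarrow> fsub E (fa F') \<and> (\<forall>S\<in>SCCS F'. TS S E \<in> BF_GR (loc F' S E) (locC F' S E C))"
      unfolding BF_GR_def using GE_dec[OF w c] .
  qed
  have 0: "AE0 F = AE F (fa F)" unfolding AE0_def AE_def admissible_def by auto
  show ?thesis using 0 1 2 3 4 unfolding BF_AE_def BF_CO_def BF_PE_def BF_GR_def by simp
qed


end
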